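(* Let $G=(V,E)$ be a finite, connected, bipartite cubic graph and $n>0$. For every $A\in\mathcal F(G)$ and every pair $x,y\in V$, the states $(A,x,x)$ and $(A,y,y)$ of $\mathcal R(G)$ intercommunicate under $P_{G,n}$: the chain started at $(A,x,x)$ reaches $(A,y,y)$ with positive probability, and vice versa.
   Context: $\mathcal F(G)=\{A\subseteq E: d_w(A)=2\text{ for all }w\in V\}$ (the 2-factors of $G$). Let $G=(V,E)$ be a finite, connected, bipartite cubic (3-regular) graph and $n>0$. For $A\subseteq E$ and $w\in V$ let $d_w(A)$ be the number of edges of $A$ incident to $w$, and let $\partial A$ be the set of vertices $w$ with $d_w(A)$ odd. Let $\mathcal R(G)$ be the set of ordered triples $(A,u,v)$ with $A\subseteq E$, $u,v\in V$, such that $\partial A=\{u,v\}$ if $u\ne v$ and $\partial A=\emptyset$ if $u=v$, $d_w(A)\ge1$ for all $w\in V$, and $d_u(A)+d_v(A)\ge4$. For $(A,u,v)\in\mathcal R(G)$ let $C_{uv}(A)$ be the connected component of $(V,A)$ containing $u$ (and $v$). Partition $\mathcal R(G)$ into: $\mathcal E$, the states where $C_{uv}(A)$ is a cycle (equivalently $u=v$); $\mathcal T$, where $C_{uv}(A)$ is a tadpole graph (a cycle with a path attached at one of its endpoints; equivalently $\{d_u(A),d_v(A)\}=\{1,3\}$); $\Theta$, where $C_{uv}(A)$ is a theta graph (two degree-3 vertices joined by three internally vertex-disjoint paths); $\mathcal D$, where $C_{uv}(A)$ is a dumbbell graph (two vertex-disjoint cycles joined by a path of length $\ge1$). An edge of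 $A$ is a bridge if deleting it from $(V,A)$ increases the number of connected components. $\triangle$ denotes symmetric difference. The Markov chain $P_{G,n}$ on $\mathcal R(G)$ is defined as follows: from the state $(A,u,v)$, for each edge $e=uu'\in E$ incident to $u$ it moves to $(A\triangle e,u',v)$, and for each edge $e=vv'\in E$ incident to $v$ it moves to $(A\triangle e,u,v')$, where such a move (along edge $e$ incident to the moved defect) has probability $1/2$ if $(A,u,v)\in\mathcal E\cup\mathcal T$ and $e\notin A$; $1/6$ if $(A,u,v)\in\Theta$; $n/(2(n+2))$ if $(A,u,v)\in\mathcal D$ and $e$ is a bridge of $(V,A)$; $1/(2(n+2))$ if $(A,u,v)\in\mathcal D$ and $e\in A$ is not a bridge; and $0$ otherwise. (If $u=v$, the two moves along the unique edge $e\notin A$ at $u$ lead to the distinct states $(A\cup e,u',u)$ and $(A\cup e,u,u')$.) All other transitions, including all identity transitions, have probability $0$. *)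

theory Defs
  imports Complex_Main
begin

type_synonym 'a state = "'a set set \<times> 'a \<times> 'a"

definition simple_graph :: "'a set \<Rightarrow> 'a set set \<Rightarrow> bool" where
  "simple_graph V E \<longleftrightarrow> (\<forall>e\<in>E. \<exists>x y. x \<in> V \<and> y \<in> V \<and> x \<noteq> y \<and> e = {x, y})"

definition deg :: "'a set set \<Rightarrow> 'a \<Rightarrow> nat" where
  "deg A w = card {e \<in> A. w \<in> e}"

definition adj :: "'a set set \<Rightarrow> ('a \<times> 'a) set" where
  "adj A = {(x, y). {x, y} \<in> A}"

definition cubic :: "'a set \<Rightarrow> 'a set set \<Rightarrow> bool" where
  "cubic V E \<longleftrightarrow> (\<forall>w\<in>V. deg E w = 3)"

definition connected_graph :: "'a set \<Rightarrow> 'a set set \<Rightarrow> bool" where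
  "connected_graph V E \<longleftrightarrow> (\<forall>x\<in>V. \<forall>y\<in>V. (x, y) \<in> (adj E)\<^sup>*)"

definition bipartite :: "'a set \<Rightarrow> 'a set set \<Rightarrow> bool" where
  "bipartite V E \<longleftrightarrow> (\<exists>X \<subseteq> V. \<forall>e\<in>E. card (e \<inter> X) = 1)"

definition bdry :: "'a set \<Rightarrow> 'a set set \<Rightarrow> 'a set" where
  "bdry V A = {w \<in> V. odd (deg A w)}"

definition two_factors :: "'a set \<Rightarrow> 'a set set \<Rightarrow> 'a set set set" where
  "two_factors V E = {A. A \<subseteq> E \<and> (\<forall>w\<in>V. deg A w = 2)}"

definition states :: "'a set \<Rightarrow> 'a set set \<Rightarrow> 'a state set" where
  "states V E = {(A, u, v). A \<subseteq> E \<and> u \<in> V \<and> v \<in> V \<and>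
      bdry V A = (if u \<noteq> v then {u, v} else {}) \<and>
      (\<forall>w\<in>V. deg A w \<ge> 1) \<and> deg A u + deg A v \<ge> 4}"

definition reach :: "'a set set \<Rightarrow> 'a \<Rightarrow> 'a set" where
  "reach A x = {y. (x, y) \<in> (adj A)\<^sup>*}"

definition components :: "'a set \<Rightarrow> 'a set set \<Rightarrow> 'a set set" where
  "components V A = reach A ` V"

definition comp_verts :: "'a set set \<Rightarrow> 'a \<Rightarrow> 'a set" where
  "comp_verts A u = reach A u"

definition comp_edges :: "'a set set \<Rightarrow> 'a \<Rightarrow> 'a set set" where
  "comp_edges A u = {e \<in> A. e \<subseteq> reach A u}"

definition is_bridge :: "'a set \<Rightarrow> 'a set set \<Rightarrow> 'a set \<Rightarrow> bool" where
  "is_bridge V A e \<longleftrightarrow> e \<in> A \<and> card (components V (A - {e})) > card (components V A)"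

definition path_edges :: "'a list \<Rightarrow> 'a set set" where
  "path_edges p = {{p ! i, p ! Suc i} | i. Suc i < length p}"

definition is_path :: "'a list \<Rightarrow> bool" where
  "is_path p \<longleftrightarrow> distinct p \<and> length p \<ge> 2"

definition interior :: "'a list \<Rightarrow> 'a set" where
  "interior p = set (butlast (tl p))"

definition cycle_edges :: "'a list \<Rightarrow> 'a set set" where
  "cycle_edges c = {{c ! i, c ! ((Suc i) mod length c)} | i. i < length c}"

definition is_cycle :: "'a list \<Rightarrow> bool" where
  "is_cycle c \<longleftrightarrow> distinct c \<and> length c \<ge> 3"

definition cycle_graph :: "'a set \<Rightarrow> 'a set set \<Rightarrow> bool" where
  "cycle_graph Vc Ec \<longleftrightarrow> (\<exists>c. is_cycle c \<and> Vc = set c \<and> Ec = cycle_edges c)"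

definition tadpole_graph :: "'a set \<Rightarrow> 'a set set \<Rightarrow> bool" where
  "tadpole_graph Vc Ec \<longleftrightarrow> (\<exists>c p. is_cycle c \<and> is_path p \<and>
      set p \<inter> set c = {hd p} \<and>
      Vc = set c \<union> set p \<and> Ec = cycle_edges c \<union> path_edges p)"

definition theta_graph :: "'a set \<Rightarrow> 'a set set \<Rightarrow> bool" where
  "theta_graph Vc Ec \<longleftrightarrow> (\<exists>a b p1 p2 p3. a \<noteq> b \<and>
      is_path p1 \<and> is_path p2 \<and> is_path p3 \<and>
      hd p1 = a \<and> hd p2 = a \<and> hd p3 = a \<and> last p1 = b \<and> last p2 = b \<and> last p3 = b \<and>
      p1 \<noteq> p2 \<and> p1 \<noteq> p3 \<and> p2 \<noteq> p3 \<and>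
      interior p1 \<inter> set p2 = {} \<and> interior p1 \<inter> set p3 = {} \<and>
      interior p2 \<inter> set p1 = {} \<and> interior p2 \<inter> set p3 = {} \<and>
      interior p3 \<inter> set p1 = {} \<and> interior p3 \<inter> set p2 = {} \<and>
      Vc = set p1 \<union> set p2 \<union> set p3 \<and>
      Ec = path_edges p1 \<union> path_edges p2 \<union> path_edges p3)"

definition dumbbell_graph :: "'a set \<Rightarrow> 'a set set \<Rightarrow> bool" where
  "dumbbell_graph Vc Ec \<longleftrightarrow> (\<exists>c1 c2 p. is_cycle c1 \<and> is_cycle c2 \<and> is_path p \<and>
      set c1 \<inter> set c2 = {} \<and> hd p \<in> set c1 \<and> last p \<in> set c2 \<and>
      interior p \<inter> (set c1 \<union> set c2) = {} \<and>
      Vc = set c1 \<union> set c2 \<union> set p \<and>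
      Ec = cycle_edges c1 \<union> cycle_edges c2 \<union> path_edges p)"

definition cls_E :: "'a set \<Rightarrow> 'a set set \<Rightarrow> 'a state set" where
  "cls_E V E = {(A, u, v) \<in> states V E. cycle_graph (comp_verts A u) (comp_edges A u)}"

definition cls_T :: "'a set \<Rightarrow> 'a set set \<Rightarrow> 'a state set" where
  "cls_T V E = {(A, u, v) \<in> states V E. tadpole_graph (comp_verts A u) (comp_edges A u)}"

definition cls_Theta :: "'a set \<Rightarrow> 'a set set \<Rightarrow> 'a state set" where
  "cls_Theta V E = {(A, u, v) \<in> states V E. theta_graph (comp_verts A u) (comp_edges A u)}"

definition cls_D :: "'a set \<Rightarrow> 'a set set \<Rightarrow> 'a state set" where
  "cls_D V E = {(A, u, v) \<in> states V E. dumbbell_graph (comp_verts A u) (comp_edges A u)}"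

definition move_weight :: "'a set \<Rightarrow> 'a set set \<Rightarrow> real \<Rightarrow> 'a state \<Rightarrow> 'a set \<Rightarrow> real" where
  "move_weight V E n s e =
     (case s of (A, u, v) \<Rightarrow>
       if s \<in> cls_E V E \<union> cls_T V E then (if e \<notin> A then 1/2 else 0)
       else if s \<in> cls_Theta V E then 1/6
       else if s \<in> cls_D V E then
         (if is_bridge V A e then n / (2 * (n + 2))
          else if e \<in> A then 1 / (2 * (n + 2)) else 0)
       else 0)"

definition P_chain :: "'a set \<Rightarrow> 'a set set \<Rightarrow> real \<Rightarrow> 'a state \<Rightarrow> 'a state \<Rightarrow> real" where
  "P_chain V E n s t =
     (case s of (A, u, v) \<Rightarrow>
        (\<Sum>u' \<in> {u' \<in> V. {u, u'} \<in> E}.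
            if t = ((A - {{u, u'}}) \<union> ({{u, u'}} - A), u', v) then move_weight V E n s {u, u'} else 0)
      + (\<Sum>v' \<in> {v' \<in> V. {v, v'} \<in> E}.
            if t = ((A - {{v, v'}}) \<union> ({{v, v'}} - A), u, v') then move_weight V E n s {v, v'} else 0))"

definition reaches :: "'a set \<Rightarrow> 'a set set \<Rightarrow> real \<Rightarrow> 'a state \<Rightarrow> 'a state \<Rightarrow> bool" where
  "reaches V E n s t \<longleftrightarrow> (\<lambda>a b. P_chain V E n a b > 0)\<^sup>*\<^sup>* s t"

end

theory Submission
  imports Defs
begin

lemma pe_Nil[simp]: "path_edges [] = {}" by (auto simp: path_edges_def)
lemma pe_single[simp]: "path_edges [a] = {}" by (auto simp: path_edges_def)
lemma pe_Cons2[simp]: "path_edges (a # b # xs) = insert {a,b} (path_edges (b # xs))"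
proof (rule set_eqI)
  fix e
  show "e \<in> path_edges (a # b # xs) \<longleftrightarrow> e \<in> insert {a,b} (path_edges (b # xs))"
  proof
    assume "e \<in> path_edges (a # b # xs)"
    then obtain i where i: "e = {(a#b#xs) ! i, (a#b#xs) ! Suc i}" "Suc i < length (a#b#xs)"
      unfolding path_edges_def by blast
    show "e \<in> insert {a,b} (path_edges (b # xs))"
    proof (cases i)
      case 0 then show ?thesis using i by simp
    next
      case (Suc j) then show ?thesis using i unfolding path_edges_def by auto
    qed
  next
    assume "e \<in> insert {a,b} (path_edges (b # xs))"
    then show "e \<in> path_edges (a # b # xs)"
    proof
      assume "e = {a,b}" then show ?thesis unfolding path_edges_def
        by (auto intro!: exI[of _ 0])
    next
      assume "e \<in> path_edges (b # xs)"
      then obtain j where j: "e = {(b#xs) ! j, (b#xs) ! Suc j}" "Suc j < length (b#xs)"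
        unfolding path_edges_def by blast
      then show ?thesis unfolding path_edges_def
        by (auto intro!: exI[of _ "Suc j"])
    qed
  qed
qed

lemma pe_Cons_nonempty: "ys \<noteq> [] \<Longrightarrow> path_edges (a # ys) = insert {a, hd ys} (path_edges ys)"
  by (cases ys) auto

lemma pe_append: "path_edges (xs @ a # ys) = path_edges (xs @ [a]) \<union> path_edges (a # ys)"
proof (induction xs)
  case Nil then show ?case by simp
next
  case (Cons x xs)
  show ?case
  proof (cases xs)
    case Nil then show ?thesis by simp
  next
    case (Cons x' xs') then show ?thesis using Cons.IH by auto
  qed
qed

lemma pe_snoc: "path_edges (xs @ [a, b]) = insert {a,b} (path_edges (xs @ [a]))"
  using pe_append[of xs a "[b]"] by auto

lemma pe_rev[simp]: "path_edges (rev xs) = path_edges xs"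
proof (induction xs rule: rev_induct)
  case Nil then show ?case by simp
next
  case (snoc x xs)
  show ?case
  proof (cases xs rule: rev_cases)
    case Nil then show ?thesis by simp
  next
    case (snoc ys y)
    then show ?thesis using snoc.IH pe_snoc[of ys y x] by (auto simp: insert_commute)
  qed
qed

lemma pe_finite[simp]: "finite (path_edges p)"
  by (induction p rule: induct_list012) auto

lemma pe_subset: "e \<in> path_edges p \<Longrightarrow> e \<subseteq> set p"
  by (induction p rule: induct_list012) auto

lemma pe_idx: "Suc i < length p \<Longrightarrow> {p ! i, p ! Suc i} \<in> path_edges p"
  unfolding path_edges_def by blast

lemma cycle_edges_pe:
  assumes "2 \<le> length c"
  shows "cycle_edges c = insert {last c, hd c} (path_edges c)"
proof (rule set_eqI)
  fix e
  have ne: "c \<noteq> []" using assms by auto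
  have L: "last c = c ! (length c - 1)" "hd c = c ! 0" using ne
    by (simp_all add: last_conv_nth hd_conv_nth)
  show "e \<in> cycle_edges c \<longleftrightarrow> e \<in> insert {last c, hd c} (path_edges c)"
  proof
    assume "e \<in> cycle_edges c"
    then obtain i where i: "e = {c ! i, c ! (Suc i mod length c)}" "i < length c"
      unfolding cycle_edges_def by blast
    show "e \<in> insert {last c, hd c} (path_edges c)"
    proof (cases "Suc i < length c")
      case True then show ?thesis using i unfolding path_edges_def by auto
    next
      case False then have "i = length c - 1" "Suc i = length c" using i by auto
      then show ?thesis using i L by auto
    qed
  next
    assume "e \<in> insert {last c, hd c} (path_edges c)"
    then show "e \<in> cycle_edges c"
    proof
      assume "e = {last c, hd c}"
      moreover have "Suc (length c - 1) = length c" using assms by simp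
      then have "Suc (length c - 1) mod length c = 0" by simp
      ultimately have "e = {c ! (length c - 1), c ! (Suc (length c - 1) mod length c)}"
        using L by simp
      moreover have "length c - 1 < length c" using assms by simp
      ultimately show ?thesis unfolding cycle_edges_def by blast
    next
      assume "e \<in> path_edges c"
      then obtain i where "e = {c ! i, c ! Suc i}" "Suc i < length c"
        unfolding path_edges_def by blast
      then show ?thesis unfolding cycle_edges_def by (auto intro!: exI[of _ i])
    qed
  qed
qed

lemma cycle_edges_subset: "e \<in> cycle_edges c \<Longrightarrow> e \<subseteq> set c"
proof -
  assume "e \<in> cycle_edges c"
  then obtain i where i: "e = {c ! i, c ! (Suc i mod length c)}" "i < length c"
    unfolding cycle_edges_def by blast
  have "0 < length c" using i(2) by linarith
  then have "Suc i mod length c < length c" by (rule mod_less_divisor)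
  then show ?thesis using i by (auto intro!: nth_mem)
qed

lemma hd_last_not_pe:
  assumes "distinct c" "3 \<le> length c"
  shows "{hd c, last c} \<notin> path_edges c"
proof
  assume "{hd c, last c} \<in> path_edges c"
  then obtain i where i: "{hd c, last c} = {c ! i, c ! Suc i}" "Suc i < length c"
    unfolding path_edges_def by blast
  have ne: "c \<noteq> []" using assms by auto
  have L: "last c = c ! (length c - 1)" "hd c = c ! 0" using ne
    by (simp_all add: last_conv_nth hd_conv_nth)
  have "(c!0 = c!i \<and> c!(length c - 1) = c ! Suc i) \<or> (c!0 = c ! Suc i \<and> c!(length c - 1) = c!i)"
    using i(1) L by (auto simp: doubleton_eq_iff)
  then show False
  proof
    assume "c!0 = c!i \<and> c!(length c - 1) = c ! Suc i"
    then have "0 = i" "length c - 1 = Suc i" using assms i(2) nth_eq_iff_index_eq by fastforce+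
    then show False using assms by simp
  next
    assume "c!0 = c ! Suc i \<and> c!(length c - 1) = c!i"
    then have "0 = Suc i" using assms i(2) nth_eq_iff_index_eq by fastforce
    then show False by simp
  qed
qed

lemma pe_last_deg:
  assumes "distinct p" "2 \<le> length p"
  shows "{e \<in> path_edges p. last p \<in> e} \<subseteq> {{p ! (length p - 2), last p}}"
proof
  fix e assume "e \<in> {e \<in> path_edges p. last p \<in> e}"
  then obtain i where i: "e = {p ! i, p ! Suc i}" "Suc i < length p" "last p \<in> e"
    unfolding path_edges_def by blast
  have ne: "p \<noteq> []" using assms by auto
  have L: "last p = p ! (length p - 1)" using ne by (simp add: last_conv_nth)
  have "p ! i \<noteq> p ! (length p - 1)" using assms i(2) nth_eq_iff_index_eq by fastforce
  then have "p ! Suc i = p ! (length p - 1)" using i L by auto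
  then have "Suc i = length p - 1" using assms i(2) nth_eq_iff_index_eq by fastforce
  then have "i = length p - 2" by simp
  then show "e \<in> {{p ! (length p - 2), last p}}" using i L \<open>Suc i = length p - 1\<close> by auto
qed

lemma cycle_deg:
  assumes "distinct c" "3 \<le> length c" "w \<in> set c"
  shows "card {e \<in> cycle_edges c. w \<in> e} \<le> 2"
proof -
  define m where "m = length c"
  obtain j where j: "j < m" "w = c ! j" using assms(3) unfolding m_def by (metis in_set_conv_nth)
  have "{e \<in> cycle_edges c. w \<in> e} \<subseteq> {{c ! j, c ! (Suc j mod m)}, {c ! ((j + m - 1) mod m), c ! (Suc ((j + m - 1) mod m) mod m)}}"
  proof
    fix e assume "e \<in> {e \<in> cycle_edges c. w \<in> e}"
    then obtain i where i: "e = {c ! i, c ! (Suc i mod m)}" "i < m" "w \<in> e"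
      unfolding cycle_edges_def m_def by blast
    have m0: "m > 0" using j by simp
    show "e \<in> {{c ! j, c ! (Suc j mod m)}, {c ! ((j + m - 1) mod m), c ! (Suc ((j + m - 1) mod m) mod m)}}"
    proof (cases "w = c ! i")
      case True then have "i = j" using assms(1) i(2) j nth_eq_iff_index_eq unfolding m_def by metis
      then show ?thesis using i by simp
    next
      case False then have "w = c ! (Suc i mod m)" using i by auto
      then have "Suc i mod m = j" using assms(1) j m0 nth_eq_iff_index_eq unfolding m_def
        by (metis mod_less_divisor)
      then have "i = (j + m - 1) mod m"
      proof (cases "Suc i < m")
        case True
        then have "j = Suc i" using \<open>Suc i mod m = j\<close> by simp
        then have "j + m - 1 = i + m" by simp
        then show ?thesis using i(2) by simp
      next
        case False
        then have "Suc i = m" using i(2) by simp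
        then have "j = 0" using \<open>Suc i mod m = j\<close> by simp
        then show ?thesis using \<open>Suc i = m\<close> by simp
      qed
      then show ?thesis using i by simp
    qed
  qed
  then have "card {e \<in> cycle_edges c. w \<in> e} \<le> card {{c ! j, c ! (Suc j mod m)}, {c ! ((j + m - 1) mod m), c ! (Suc ((j + m - 1) mod m) mod m)}}"
    by (intro card_mono) auto
  also have "\<dots> \<le> 2" by (rule order_trans[OF card_insert_le_m1]) auto
  finally show ?thesis .
qed


definition conn :: "'a set set \<Rightarrow> 'a set \<Rightarrow> bool" where
  "conn F W \<longleftrightarrow> (\<forall>a\<in>W. \<forall>b\<in>W. (a,b) \<in> (adj F)\<^sup>*)"

lemma adj_sym: "sym (adj F)"
  unfolding sym_def adj_def
proof (intro allI impI)
  fix x y assume "(x, y) \<in> {(x, y). {x, y} \<in> F}"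
  then have "{y, x} \<in> F" by (simp add: insert_commute)
  then show "(y, x) \<in> {(x, y). {x, y} \<in> F}" by simp
qed

lemma rt_sym: "(a,b) \<in> (adj F)\<^sup>* \<Longrightarrow> (b,a) \<in> (adj F)\<^sup>*"
  by (rule symD[OF sym_rtrancl[OF adj_sym]])

lemma adj_mono: "F \<subseteq> G \<Longrightarrow> adj F \<subseteq> adj G"
  unfolding adj_def by auto

lemma rt_mono: "F \<subseteq> G \<Longrightarrow> (a,b) \<in> (adj F)\<^sup>* \<Longrightarrow> (a,b) \<in> (adj G)\<^sup>*"
  using rtrancl_mono[OF adj_mono] by blast

lemma conn_from:
  assumes "w0 \<in> W" "\<forall>z\<in>W. (w0,z) \<in> (adj F)\<^sup>*"
  shows "conn F W"
  unfolding conn_def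
proof (intro ballI)
  fix a b assume "a \<in> W" "b \<in> W"
  then have "(w0,a) \<in> (adj F)\<^sup>*" "(w0,b) \<in> (adj F)\<^sup>*" using assms by auto
  then have "(a,w0) \<in> (adj F)\<^sup>*" "(w0,b) \<in> (adj F)\<^sup>*" by (auto intro: rt_sym)
  then show "(a,b) \<in> (adj F)\<^sup>*" by (rule rtrancl_trans)
qed

lemma conn_mono: "conn F W \<Longrightarrow> F \<subseteq> G \<Longrightarrow> conn G W"
  unfolding conn_def by (meson rt_mono)

lemma conn_union:
  assumes "conn F W1" "conn G W2" "W1 \<inter> W2 \<noteq> {}"
  shows "conn (F \<union> G) (W1 \<union> W2)"
proof -
  obtain w where w: "w \<in> W1" "w \<in> W2" using assms(3) by blast
  have c1: "conn (F \<union> G) W1" using conn_mono[OF assms(1)] by blast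
  have c2: "conn (F \<union> G) W2" using conn_mono[OF assms(2)] by blast
  show ?thesis
  proof (rule conn_from[of w])
    show "w \<in> W1 \<union> W2" using w by simp
    show "\<forall>z\<in>W1 \<union> W2. (w, z) \<in> (adj (F \<union> G))\<^sup>*"
      using c1 c2 w unfolding conn_def by blast
  qed
qed

lemma conn_path: "p \<noteq> [] \<Longrightarrow> conn (path_edges p) (set p)"
proof (induction p rule: induct_list012)
  case 1 then show ?case by simp
next
  case (2 x) then show ?case by (simp add: conn_def)
next
  case (3 a b xs)
  have c: "conn (path_edges (b # xs)) (set (b # xs))" using 3(2) by simp
  have "conn {{a,b}} {a,b}"
  proof (rule conn_from[of a])
    have "(a,b) \<in> adj {{a,b}}" by (simp add: adj_def)
    then show "\<forall>z\<in>{a,b}. (a,z) \<in> (adj {{a,b}})\<^sup>*" by auto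
  qed simp
  from conn_union[OF this c] have X: "conn ({{a, b}} \<union> path_edges (b # xs)) ({a, b} \<union> set (b # xs))"
    by simp
  have e1: "{{a,b}} \<union> path_edges (b#xs) = path_edges (a#b#xs)" by simp
  have e2: "{a,b} \<union> set (b#xs) = set (a#b#xs)" by auto
  show ?case using X unfolding e1 e2 .
qed

lemma conn_cycle: "3 \<le> length c \<Longrightarrow> conn (cycle_edges c) (set c)"
proof -
  assume l: "3 \<le> length c"
  then have "path_edges c \<subseteq> cycle_edges c" using cycle_edges_pe[of c] by auto
  moreover have "c \<noteq> []" using l by auto
  ultimately show ?thesis using conn_path[of c] conn_mono by blast
qed

lemma conn_cycle_graph: "cycle_graph Vc Ec \<Longrightarrow> conn Ec Vc"
  unfolding cycle_graph_def is_cycle_def using conn_cycle by blast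

lemma conn_tadpole: "tadpole_graph Vc Ec \<Longrightarrow> conn Ec Vc"
proof -
  assume "tadpole_graph Vc Ec"
  then obtain c p where h: "is_cycle c" "is_path p" "set p \<inter> set c = {hd p}"
      "Vc = set c \<union> set p" "Ec = cycle_edges c \<union> path_edges p"
    unfolding tadpole_graph_def by (elim exE conjE) (rule that; assumption)
  have ne: "p \<noteq> []" using h(2) unfolding is_path_def by auto
  have l: "3 \<le> length c" using h(1) unfolding is_cycle_def by auto
  have "set c \<inter> set p \<noteq> {}" using h(3) by auto
  from conn_union[OF conn_cycle[OF l] conn_path[OF ne] this] show "conn Ec Vc" using h by simp
qed

lemma conn_theta: "theta_graph Vc Ec \<Longrightarrow> conn Ec Vc"
proof -
  assume "theta_graph Vc Ec"
  then obtain a b p1 p2 p3 where h: "is_path p1" "is_path p2" "is_path p3"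
      "hd p1 = a" "hd p2 = a" "hd p3 = a"
      "Vc = set p1 \<union> set p2 \<union> set p3"
      "Ec = path_edges p1 \<union> path_edges p2 \<union> path_edges p3"
    unfolding theta_graph_def by (elim exE conjE) (rule that; assumption)
  have ne: "p1 \<noteq> []" "p2 \<noteq> []" "p3 \<noteq> []" using h(1-3) unfolding is_path_def by auto
  have "a \<in> set p1" using h(4) ne(1) hd_in_set by blast
  have "a \<in> set p2" using h(5) ne(2) hd_in_set by blast
  have "a \<in> set p3" using h(6) ne(3) hd_in_set by blast
  note this \<open>a \<in> set p1\<close> \<open>a \<in> set p2\<close>
  then have i1: "set p1 \<inter> set p2 \<noteq> {}" by blast
  have c12: "conn (path_edges p1 \<union> path_edges p2) (set p1 \<union> set p2)"
    using conn_union[OF conn_path[OF ne(1)] conn_path[OF ne(2)] i1] .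
  have i2: "(set p1 \<union> set p2) \<inter> set p3 \<noteq> {}" using \<open>a \<in> set p1\<close> \<open>a \<in> set p3\<close> by blast
  show "conn Ec Vc" unfolding h(7,8)
    using conn_union[OF c12 conn_path[OF ne(3)] i2] .
qed

lemma conn_dumbbell: "dumbbell_graph Vc Ec \<Longrightarrow> conn Ec Vc"
proof -
  assume "dumbbell_graph Vc Ec"
  then obtain c1 c2 p where h: "is_cycle c1" "is_cycle c2" "is_path p"
      "hd p \<in> set c1" "last p \<in> set c2"
      "Vc = set c1 \<union> set c2 \<union> set p"
      "Ec = cycle_edges c1 \<union> cycle_edges c2 \<union> path_edges p"
    unfolding dumbbell_graph_def by (elim exE conjE) (rule that; assumption)
  have ne: "p \<noteq> []" using h(3) unfolding is_path_def by auto
  have l: "3 \<le> length c1" "3 \<le> length c2" using h(1,2) unfolding is_cycle_def by auto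
  have i1: "set c1 \<inter> set p \<noteq> {}" using h(4) hd_in_set[OF ne] by blast
  have c1: "conn (cycle_edges c1 \<union> path_edges p) (set c1 \<union> set p)"
    using conn_union[OF conn_cycle[OF l(1)] conn_path[OF ne] i1] .
  have i2: "(set c1 \<union> set p) \<inter> set c2 \<noteq> {}" using h(5) last_in_set[OF ne] by blast
  from conn_union[OF c1 conn_cycle[OF l(2)] i2]
  have "conn (cycle_edges c1 \<union> path_edges p \<union> cycle_edges c2) (set c1 \<union> set p \<union> set c2)" .
  then show "conn Ec Vc" unfolding h(6,7) by (simp add: Un_ac)
qed

section \<open>components of modified edge sets\<close>

lemma sg_edge: "simple_graph V E \<Longrightarrow> e \<in> E \<Longrightarrow> \<exists>a b. a \<in> V \<and> b \<in> V \<and> a \<noteq> b \<and> e = {a,b}"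
  unfolding simple_graph_def by blast

lemma reach_step:
  assumes "z \<in> reach A a" "{z,z'} \<in> A"
  shows "z' \<in> reach A a"
proof -
  have "(z,z') \<in> adj A" using assms(2) by (simp add: adj_def)
  then show ?thesis using assms(1) unfolding reach_def by (auto intro: rtrancl_into_rtrancl)
qed

lemma reach_self: "a \<in> reach A a" unfolding reach_def by simp

lemma reach_eq:
  assumes "b \<in> reach A a" shows "reach A b = reach A a"
proof -
  have ab: "(a,b) \<in> (adj A)\<^sup>*" using assms unfolding reach_def by auto
  then have ba: "(b,a) \<in> (adj A)\<^sup>*" by (rule rt_sym)
  show ?thesis unfolding reach_def
  proof (intro set_eqI iffI)
    fix z assume "z \<in> {y. (b, y) \<in> (adj A)\<^sup>*}"
    then have "(b,z) \<in> (adj A)\<^sup>*" by simp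
    then show "z \<in> {y. (a, y) \<in> (adj A)\<^sup>*}" using rtrancl_trans[OF ab] by simp
  next
    fix z assume "z \<in> {y. (a, y) \<in> (adj A)\<^sup>*}"
    then have "(a,z) \<in> (adj A)\<^sup>*" by simp
    then show "z \<in> {y. (b, y) \<in> (adj A)\<^sup>*}" using rtrancl_trans[OF ba] by simp
  qed
qed

lemma reach_disj: "b \<notin> reach A a \<Longrightarrow> reach A a \<inter> reach A b = {}"
proof (rule ccontr)
  assume b: "b \<notin> reach A a" and "reach A a \<inter> reach A b \<noteq> {}"
  then obtain z where z: "z \<in> reach A a" "z \<in> reach A b" by blast
  have "reach A z = reach A a" "reach A z = reach A b" using reach_eq z by metis+
  then show False using b reach_self[of b A] by simp
qed

lemma comp_generic:
  assumes sg: "simple_graph V E" and AE: "A \<subseteq> E" and AddE: "Add \<subseteq> E"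
    and AddW: "\<forall>e\<in>Add. e \<subseteq> W"
    and W: "W = reach A a1 \<union> reach A a2"
    and B: "B = (A \<union> Add) - Rem"
    and F: "F = (comp_edges A a1 \<union> comp_edges A a2 \<union> Add) - Rem"
    and cF: "conn F W" and w: "w \<in> W"
  shows "reach B w = W \<and> comp_edges B w = F"
proof -
  have FB: "F \<subseteq> B" unfolding F B comp_edges_def by auto
  have WR: "W \<subseteq> reach B w"
  proof
    fix z assume "z \<in> W"
    then have "(w,z) \<in> (adj F)\<^sup>*" using cF w unfolding conn_def by blast
    then show "z \<in> reach B w" unfolding reach_def using rt_mono[OF FB] by blast
  qed
  have RW: "reach B w \<subseteq> W"
  proof
    fix z assume "z \<in> reach B w"
    then have "(w,z) \<in> (adj B)\<^sup>*" unfolding reach_def by simp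
    then show "z \<in> W"
    proof (induction rule: rtrancl_induct)
      case base then show ?case using w .
    next
      case (step y z)
      then have yz: "{y,z} \<in> B" by (simp add: adj_def)
      show ?case
      proof (cases "{y,z} \<in> Add")
        case True then show ?thesis using AddW by auto
      next
        case False
        then have yzA: "{y,z} \<in> A" using yz B by auto
        have "y \<in> reach A a1 \<or> y \<in> reach A a2" using step.IH W by auto
        then have "z \<in> reach A a1 \<or> z \<in> reach A a2" using reach_step[OF _ yzA] by blast
        then show ?thesis using W by auto
      qed
    qed
  qed
  have R: "reach B w = W" using WR RW by blast
  have "comp_edges B w = F"
  proof
    show "F \<subseteq> comp_edges B w"
    proof
      fix e assume e: "e \<in> F"
      have "e \<subseteq> W"
      proof (cases "e \<in> Add")
        case True then show ?thesis using AddW by auto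
      next
        case False then have "e \<in> comp_edges A a1 \<union> comp_edges A a2" using e F by auto
        then show ?thesis unfolding comp_edges_def W by auto
      qed
      then show "e \<in> comp_edges B w" using e FB R unfolding comp_edges_def by auto
    qed
  next
    show "comp_edges B w \<subseteq> F"
    proof
      fix e assume e: "e \<in> comp_edges B w"
      then have eB: "e \<in> B" and eW: "e \<subseteq> W" using R unfolding comp_edges_def by auto
      show "e \<in> F"
      proof (cases "e \<in> Add")
        case True then show ?thesis using eB B F by auto
      next
        case False
        then have eA: "e \<in> A" "e \<notin> Rem" using eB B by auto
        obtain p q where pq: "e = {p,q}" using sg_edge[OF sg] eA AE by blast
        have "p \<in> W" using eW pq by auto
        then have "p \<in> reach A a1 \<or> p \<in> reach A a2" using W by auto
        moreover have pqA: "{p,q} \<in> A" using eA pq by simp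
        ultimately have "(p \<in> reach A a1 \<and> q \<in> reach A a1) \<or> (p \<in> reach A a2 \<and> q \<in> reach A a2)"
          using reach_step[OF _ pqA] by blast
        then have "e \<in> comp_edges A a1 \<or> e \<in> comp_edges A a2"
          using eA pq unfolding comp_edges_def by auto
        then show ?thesis using eA F by auto
      qed
    qed
  qed
  then show ?thesis using R by simp
qed

section \<open>the classes E and T are excluded by degrees\<close>

lemma deg_comp:
  assumes "w \<in> reach B u" "\<forall>e\<in>B. \<exists>a b. e = {a,b}"
  shows "{e \<in> comp_edges B u. w \<in> e} = {e \<in> B. w \<in> e}"
proof
  show "{e \<in> B. w \<in> e} \<subseteq> {e \<in> comp_edges B u. w \<in> e}"
  proof
    fix e assume e: "e \<in> {e \<in> B. w \<in> e}"
    then obtain a b where ab: "e = {a,b}" using assms(2) by blast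
    have "e = {w, a} \<or> e = {w, b}" using e ab by auto
    moreover have "{w,a} \<in> B \<Longrightarrow> a \<in> reach B u" "{w,b} \<in> B \<Longrightarrow> b \<in> reach B u"
      using reach_step[OF assms(1)] by blast+
    ultimately have "e \<subseteq> reach B u" using assms(1) e ab by auto
    then show "e \<in> {e \<in> comp_edges B u. w \<in> e}" using e unfolding comp_edges_def by auto
  qed
qed (auto simp: comp_edges_def)

lemma not_ET:
  assumes fin: "finite B" and two: "\<forall>e\<in>B. \<exists>a b. e = {a,b}"
    and dg: "\<forall>w\<in>reach B u. deg B w \<ge> 2"
    and w3: "w3 \<in> reach B u" "deg B w3 \<ge> 3"
  shows "\<not> cycle_graph (comp_verts B u) (comp_edges B u) \<and> \<not> tadpole_graph (comp_verts B u) (comp_edges B u)"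
proof -
  have D: "card {e \<in> comp_edges B u. w \<in> e} = deg B w" if "w \<in> reach B u" for w
  proof -
    have "{e \<in> comp_edges B u. w \<in> e} = {e \<in> B. w \<in> e}" by (rule deg_comp[OF that two])
    then show ?thesis unfolding deg_def by simp
  qed
  show ?thesis
  proof
    show "\<not> cycle_graph (comp_verts B u) (comp_edges B u)"
    proof
      assume "cycle_graph (comp_verts B u) (comp_edges B u)"
      then obtain c where c: "is_cycle c" "reach B u = set c" "comp_edges B u = cycle_edges c"
        unfolding cycle_graph_def comp_verts_def by blast
      have cd: "distinct c" "3 \<le> length c" using c(1) unfolding is_cycle_def by auto
      have "w3 \<in> set c" using w3(1) c(2) by simp
      from cycle_deg[OF cd this] have "card {e \<in> cycle_edges c. w3 \<in> e} \<le> 2" .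
      moreover have "card {e \<in> cycle_edges c. w3 \<in> e} = deg B w3" using D[OF w3(1)] c(3) by simp
      ultimately show False using w3(2) by simp
    qed
  next
    show "\<not> tadpole_graph (comp_verts B u) (comp_edges B u)"
    proof
      assume "tadpole_graph (comp_verts B u) (comp_edges B u)"
      then obtain c p where h: "is_cycle c" "is_path p" "set p \<inter> set c = {hd p}"
        "comp_verts B u = set c \<union> set p" "comp_edges B u = cycle_edges c \<union> path_edges p"
        unfolding tadpole_graph_def by (elim exE conjE) (rule that; assumption)
      have dp: "distinct p" "2 \<le> length p" using h(2) unfolding is_path_def by auto
      have ne: "p \<noteq> []" using dp by auto
      have "last p \<noteq> hd p"
      proof
        assume "last p = hd p"
        then have "p ! (length p - 1) = p ! 0" using ne by (simp add: last_conv_nth hd_conv_nth)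
        moreover have "length p - 1 < length p" "0 < length p" using dp by auto
        ultimately have "length p - 1 = 0" using dp(1) nth_eq_iff_index_eq by blast
        then show False using dp by simp
      qed
      moreover have lp: "last p \<in> set p" using ne by simp
      ultimately have lc: "last p \<notin> set c" using h(3) by blast
      have sub: "{e \<in> comp_edges B u. last p \<in> e} \<subseteq> {{p ! (length p - 2), last p}}"
      proof
        fix e assume e: "e \<in> {e \<in> comp_edges B u. last p \<in> e}"
        have "e \<notin> cycle_edges c"
        proof
          assume "e \<in> cycle_edges c"
          then have "e \<subseteq> set c" by (rule cycle_edges_subset)
          then show False using e lc by blast
        qed
        then have "e \<in> {e \<in> path_edges p. last p \<in> e}" using e h(5) by blast
        then show "e \<in> {{p ! (length p - 2), last p}}" using pe_last_deg[OF dp] by blast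
      qed
      have "card {e \<in> comp_edges B u. last p \<in> e} \<le> card {{p ! (length p - 2), last p}}"
        by (rule card_mono[OF _ sub]) simp
      then have "card {e \<in> comp_edges B u. last p \<in> e} \<le> 1" by simp
      moreover have lr: "last p \<in> reach B u" using h(4) lp unfolding comp_verts_def by simp
      ultimately have "deg B (last p) \<le> 1" using D[OF lr] by simp
      then show False using dg lr by fastforce
    qed
  qed
qed

lemma mw_nonneg: "n > 0 \<Longrightarrow> move_weight V E n s e \<ge> 0"
  unfolding move_weight_def by (auto split: prod.splits)

lemma step_u:
  assumes "finite V" "n > 0" "u' \<in> V" "{u,u'} \<in> E" "move_weight V E n (B,u,v) {u,u'} > 0"
  shows "P_chain V E n (B,u,v) ((B - {{u,u'}}) \<union> ({{u,u'}} - B), u', v) > 0"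
proof -
  let ?t = "((B - {{u,u'}}) \<union> ({{u,u'}} - B), u', v)"
  let ?f = "\<lambda>x. if ?t = ((B - {{u, x}}) \<union> ({{u, x}} - B), x, v) then move_weight V E n (B,u,v) {u, x} else 0"
  let ?g = "\<lambda>x. if ?t = ((B - {{v, x}}) \<union> ({{v, x}} - B), u, x) then move_weight V E n (B,u,v) {v, x} else 0"
  have S: "{u' \<in> V. {u, u'} \<in> E} \<subseteq> V" by auto
  have fin: "finite {u' \<in> V. {u, u'} \<in> E}" using assms(1) by simp
  have "?f u' \<le> sum ?f {u' \<in> V. {u, u'} \<in> E}"
    by (rule member_le_sum) (use assms mw_nonneg fin in auto)
  moreover have "0 \<le> sum ?g {v' \<in> V. {v, v'} \<in> E}"
    by (rule sum_nonneg) (use assms mw_nonneg in auto)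
  moreover have "?f u' > 0" using assms by simp
  ultimately show ?thesis unfolding P_chain_def by simp
qed

lemma step_v:
  assumes "finite V" "n > 0" "v' \<in> V" "{v,v'} \<in> E" "move_weight V E n (B,u,v) {v,v'} > 0"
  shows "P_chain V E n (B,u,v) ((B - {{v,v'}}) \<union> ({{v,v'}} - B), u, v') > 0"
proof -
  let ?t = "((B - {{v,v'}}) \<union> ({{v,v'}} - B), u, v')"
  let ?f = "\<lambda>x. if ?t = ((B - {{u, x}}) \<union> ({{u, x}} - B), x, v) then move_weight V E n (B,u,v) {u, x} else 0"
  let ?g = "\<lambda>x. if ?t = ((B - {{v, x}}) \<union> ({{v, x}} - B), u, x) then move_weight V E n (B,u,v) {v, x} else 0"
  have fin: "finite {u' \<in> V. {v, u'} \<in> E}" using assms(1) by simp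
  have "?g v' \<le> sum ?g {v' \<in> V. {v, v'} \<in> E}"
    by (rule member_le_sum) (use assms mw_nonneg fin in auto)
  moreover have "0 \<le> sum ?f {u' \<in> V. {u, u'} \<in> E}"
    by (rule sum_nonneg) (use assms mw_nonneg in auto)
  moreover have "?g v' > 0" using assms by simp
  ultimately show ?thesis unfolding P_chain_def by simp
qed

lemma mw_ET:
  assumes "(B,u,v) \<in> cls_E V E \<union> cls_T V E" "e \<notin> B"
  shows "move_weight V E n (B,u,v) e > 0"
  using assms unfolding move_weight_def by simp

lemma mw_TD:
  assumes "(B,u,v) \<notin> cls_E V E \<union> cls_T V E" "(B,u,v) \<in> cls_Theta V E \<union> cls_D V E" "e \<in> B" "n > 0"
  shows "move_weight V E n (B,u,v) e > 0"
  using assms unfolding move_weight_def by (auto simp: is_bridge_def)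


lemma pe_snoc1: "p \<noteq> [] \<Longrightarrow> path_edges (p @ [x]) = insert {last p, x} (path_edges p)"
proof -
  assume ne: "p \<noteq> []"
  then have p: "p = butlast p @ [last p]" by simp
  have "path_edges (butlast p @ last p # [x]) = path_edges (butlast p @ [last p]) \<union> path_edges [last p, x]"
    by (rule pe_append)
  then show ?thesis using p by (metis append.assoc append_Cons append_Nil Un_insert_right pe_Cons2 pe_single sup_bot.right_neutral)
qed

lemma cyc_nbrs:
  assumes d: "distinct c" and l: "3 \<le> length c" and v: "v \<in> set c"
  shows "\<exists>a b. a \<noteq> b \<and> {v,a} \<in> cycle_edges c \<and> {v,b} \<in> cycle_edges c"
proof -
  define m where "m = length c"
  have m3: "3 \<le> m" using l m_def by simp
  obtain i where i: "i < m" "v = c ! i" using v unfolding m_def by (metis in_set_conv_nth)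
  define j where "j = (i + m - 1) mod m"
  have jm: "j < m" unfolding j_def using m3 by simp
  have sj: "Suc j mod m = i"
  proof -
    have "Suc j mod m = Suc (i + m - 1) mod m" unfolding j_def by (simp add: mod_Suc_eq)
    also have "Suc (i + m - 1) = i + m" using m3 by simp
    finally show ?thesis using i by simp
  qed
  have e1: "{v, c ! (Suc i mod m)} \<in> cycle_edges c"
    unfolding cycle_edges_def m_def using i unfolding m_def by blast
  have "{c ! j, c ! (Suc j mod m)} \<in> cycle_edges c"
    unfolding cycle_edges_def using jm unfolding m_def by blast
  then have e2: "{v, c ! j} \<in> cycle_edges c" using sj i by (simp add: insert_commute)
  have ne: "Suc i mod m \<noteq> j"
  proof (cases "i = 0")
    case True
    then have "Suc i mod m = 1" "j = m - 1" unfolding j_def using m3 by auto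
    then show ?thesis using m3 by simp
  next
    case False
    show ?thesis
    proof (cases "Suc i = m")
      case True
      then have s0: "Suc i mod m = 0" by simp
      have eq: "i + m - 1 = (m - 2) + m" using True m3 by simp
      have "j = ((m - 2) + m) mod m" unfolding j_def eq by (rule refl)
      also have "\<dots> = (m - 2) mod m" by (rule mod_add_self2)
      also have "\<dots> = m - 2" using m3 by simp
      finally have "j = m - 2" .
      then show ?thesis using m3 s0 by simp
    next
      case F2: False
      then have s0: "Suc i mod m = Suc i" using i by simp
      have eq: "i + m - 1 = (i - 1) + m" using False by simp
      have "j = ((i - 1) + m) mod m" unfolding j_def eq by (rule refl)
      also have "\<dots> = (i - 1) mod m" by (rule mod_add_self2)
      also have "\<dots> = i - 1" using i by simp
      finally have "j = i - 1" .
      then show ?thesis using s0 by simp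
    qed
  qed
  have "Suc i mod m < m" using m3 by simp
  then have "c ! (Suc i mod m) \<noteq> c ! j"
    using ne jm nth_eq_iff_index_eq[OF d, of "Suc i mod m" j] unfolding m_def by simp
  then show ?thesis using e1 e2 by blast
qed

locale TF =
  fixes V :: "'a set" and E :: "'a set set" and A :: "'a set set"
  assumes finV: "finite V" and sg: "simple_graph V E" and cub: "cubic V E"
    and tf: "A \<in> two_factors V E"
begin

lemma AE: "A \<subseteq> E" using tf unfolding two_factors_def by simp
lemma degA: "w \<in> V \<Longrightarrow> deg A w = 2" using tf unfolding two_factors_def by simp
lemma degE: "w \<in> V \<Longrightarrow> deg E w = 3" using cub unfolding cubic_def by simp

lemma edgeE: "e \<in> E \<Longrightarrow> \<exists>a b. a \<in> V \<and> b \<in> V \<and> a \<noteq> b \<and> e = {a,b}"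
  using sg unfolding simple_graph_def by blast

lemma EPow: "E \<subseteq> Pow V" using edgeE by blast
lemma finE: "finite E" using finite_subset[OF EPow] finV by simp
lemma finA: "finite A" using finite_subset[OF AE finE] .

lemma edge2: "{a,b} \<in> E \<Longrightarrow> a \<noteq> b \<and> a \<in> V \<and> b \<in> V"
proof -
  assume "{a,b} \<in> E"
  then obtain p q where "p \<in> V" "q \<in> V" "p \<noteq> q" "{a,b} = {p,q}" using edgeE by blast
  then show ?thesis by (auto simp: doubleton_eq_iff)
qed

lemma two_ed: "\<forall>e\<in>B. \<exists>a b. e = {a,b}" if "B \<subseteq> E" for B
  using that edgeE by blast

lemma card3: "x \<noteq> y \<Longrightarrow> x \<noteq> z \<Longrightarrow> y \<noteq> z \<Longrightarrow> card {x,y,z} = 3" by simp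

lemma doubleton_neq: "a \<noteq> b \<Longrightarrow> {w,a} \<noteq> {w,b}"
  by (auto simp: doubleton_eq_iff)

lemma nb3:
  assumes w: "w \<in> V" and e: "{w,a} \<in> A" "{w,b} \<in> A" "{w,c} \<in> A" and ab: "a \<noteq> b"
  shows "c = a \<or> c = b"
proof (rule ccontr)
  assume "\<not> (c = a \<or> c = b)"
  then have ca: "c \<noteq> a" "c \<noteq> b" by auto
  have sub: "{{w,a},{w,b},{w,c}} \<subseteq> {e \<in> A. w \<in> e}" using e by auto
  have "card {{w,a},{w,b},{w,c}} = 3"
    by (rule card3) (use doubleton_neq[OF ab] doubleton_neq[OF ca(1)] doubleton_neq[OF ca(2)] in auto)
  moreover have "card {{w,a},{w,b},{w,c}} \<le> card {e \<in> A. w \<in> e}"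
    by (rule card_mono[OF _ sub]) (simp add: finA)
  ultimately show False using degA[OF w] unfolding deg_def by simp
qed

lemma Aedges_at:
  assumes w: "w \<in> V"
  shows "\<exists>a b. a \<noteq> b \<and> {w,a} \<in> A \<and> {w,b} \<in> A"
proof -
  have "card {e \<in> A. w \<in> e} = 2" using degA[OF w] unfolding deg_def .
  then obtain e1 e2 where e: "e1 \<noteq> e2" "{e \<in> A. w \<in> e} = {e1,e2}" by (auto simp: card_2_iff)
  then have e1: "e1 \<in> A" "w \<in> e1" and e2: "e2 \<in> A" "w \<in> e2" by auto
  obtain p q where pq: "e1 = {p,q}" using edgeE e1 AE by blast
  obtain a where a: "e1 = {w,a}" using pq e1(2) by auto
  obtain r s where rs: "e2 = {r,s}" using edgeE e2 AE by blast
  obtain b where b: "e2 = {w,b}" using rs e2(2) by auto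
  have "a \<noteq> b" using a b e(1) by auto
  then show ?thesis using a b e1 e2 by blast
qed

lemma nonA_unique:
  assumes w: "w \<in> V" and a: "{w,a} \<in> E" "{w,a} \<notin> A" and b: "{w,b} \<in> E" "{w,b} \<notin> A"
  shows "a = b"
proof (rule ccontr)
  assume ab: "a \<noteq> b"
  have S: "{e \<in> A. w \<in> e} \<union> {{w,a},{w,b}} \<subseteq> {e \<in> E. w \<in> e}" using AE a b by auto
  have "card ({e \<in> A. w \<in> e} \<union> {{w,a},{w,b}}) = card {e \<in> A. w \<in> e} + card {{w,a},{w,b}}"
    by (rule card_Un_disjoint) (use finA a b in auto)
  also have "\<dots> = 4" using degA[OF w] doubleton_neq[OF ab] unfolding deg_def by simp
  finally have "4 \<le> card {e \<in> E. w \<in> e}"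
    using card_mono[OF _ S] finE by (metis (no_types, lifting) finite_subset mem_Collect_eq subsetI)
  then show False using degE[OF w] unfolding deg_def by simp
qed

lemma nonA_ex:
  assumes w: "w \<in> V"
  shows "\<exists>w'. {w,w'} \<in> E \<and> {w,w'} \<notin> A"
proof -
  have "{e \<in> A. w \<in> e} \<subseteq> {e \<in> E. w \<in> e}" using AE by auto
  moreover have "card {e \<in> A. w \<in> e} < card {e \<in> E. w \<in> e}"
    using degA[OF w] degE[OF w] unfolding deg_def by simp
  ultimately have "\<exists>e. e \<in> {e \<in> E. w \<in> e} \<and> e \<notin> {e \<in> A. w \<in> e}"
    by (metis (no_types, lifting) subsetI subset_antisym less_irrefl)
  then obtain e where e: "e \<in> E" "w \<in> e" "e \<notin> A" by auto
  obtain p q where "e = {p,q}" using edgeE e by blast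
  then obtain w' where "e = {w,w'}" using e(2) by auto
  then show ?thesis using e by blast
qed

lemma cyc_closed:
  assumes c: "distinct c" "3 \<le> length c" "cycle_edges c \<subseteq> A" and v: "v \<in> set c" "v \<in> V"
    and u: "{v,u} \<in> A"
  shows "{v,u} \<in> cycle_edges c"
proof -
  obtain a b where ab: "a \<noteq> b" "{v,a} \<in> cycle_edges c" "{v,b} \<in> cycle_edges c"
    using cyc_nbrs[OF c(1,2) v(1)] by blast
  then have "u = a \<or> u = b" using nb3[OF v(2) _ _ u ab(1)] c(3) by blast
  then show ?thesis using ab by blast
qed

end

definition cyc :: "'a set set \<Rightarrow> 'a \<Rightarrow> 'a \<Rightarrow> 'a list \<Rightarrow> bool" where
  "cyc A w z c \<longleftrightarrow> distinct c \<and> 3 \<le> length c \<and> hd c = w \<and> last c = z \<and>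
     reach A w = set c \<and> comp_edges A w = insert {w,z} (path_edges c) \<and> path_edges c \<subseteq> A \<and> {w,z} \<in> A"

context TF begin

lemma core:
  assumes w: "w \<in> V" and wz: "{w,z} \<in> A"
  shows "\<exists>c. cyc A w z c"
proof -
  have zw: "z \<noteq> w" "z \<in> V" using edge2[of w z] wz AE by auto
  define P where "P q \<longleftrightarrow> distinct (z#w#q) \<and> set q \<subseteq> V \<and> path_edges (z#w#q) \<subseteq> A" for q
  have P0: "P []" unfolding P_def using zw wz by (auto simp: insert_commute)
  have bound: "\<forall>q. P q \<longrightarrow> length q < card V"
  proof (intro allI impI)
    fix q assume "P q"
    then have d: "distinct (z#w#q)" and s: "set (z#w#q) \<subseteq> V" unfolding P_def using w zw by auto
    have "card (set (z#w#q)) \<le> card V" by (rule card_mono[OF finV s])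
    then show "length q < card V" using distinct_card[OF d] by simp
  qed
  obtain q where q: "P q" and qmax: "\<forall>q'. P q' \<longrightarrow> length q' \<le> length q"
    using ex_has_greatest_nat[of P "[]" length "card V", OF P0 bound] by blast
  define p where "p = z#w#q"
  have pd: "distinct p" and pV: "set p \<subseteq> V" and pA: "path_edges p \<subseteq> A"
    using q w zw unfolding P_def p_def by auto
  have pne: "p \<noteq> []" and pl: "2 \<le> length p" unfolding p_def by auto
  define L where "L = last p"
  have LV: "L \<in> V" using pV pne unfolding L_def by auto
  have ext: "x \<in> set p" if "{L,x} \<in> A" for x
  proof (rule ccontr)
    assume x: "x \<notin> set p"
    have xV: "x \<in> V" using edge2[of L x] that AE by auto
    have "P (q @ [x])"
    proof -
      have "path_edges (p @ [x]) = insert {L,x} (path_edges p)" using pe_snoc1[OF pne] L_def by simp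
      then have "path_edges (p @ [x]) \<subseteq> A" using pA that by auto
      moreover have "distinct (p @ [x])" using pd x by simp
      moreover have "set (q @ [x]) \<subseteq> V" using pV xV unfolding p_def by auto
      ultimately show ?thesis unfolding P_def p_def by simp
    qed
    then show False using qmax by fastforce
  qed
  define k where "k = length p - 1"
  have k: "k < length p" "p ! k = L" "1 \<le> k" unfolding k_def L_def using pl pne by (auto simp: last_conv_nth)
  define M where "M = p ! (k - 1)"
  have MA: "{M, L} \<in> A"
  proof -
    have "Suc (k-1) < length p" using k by simp
    then have "{p ! (k-1), p ! Suc (k-1)} \<in> path_edges p" by (rule pe_idx)
    then show ?thesis using pA k unfolding M_def by auto
  qed
  obtain a b where ab: "a \<noteq> b" "{L,a} \<in> A" "{L,b} \<in> A" using Aedges_at[OF LV] by blast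
  obtain x where x: "x \<noteq> M" "{L,x} \<in> A" using ab by metis
  have xp: "x \<in> set p" using ext[OF x(2)] .
  have xL: "x \<noteq> L" using edge2[of L x] x AE by auto
  have xV: "x \<in> V" using xp pV by auto
  obtain j where j: "j < length p" "x = p ! j" using xp by (metis in_set_conv_nth)
  have jk: "j \<noteq> k" "j \<noteq> k - 1" using j k x xL unfolding M_def by auto
  have xz: "x = z"
  proof (rule ccontr)
    assume "x \<noteq> z"
    moreover have "p ! 0 = z" unfolding p_def by simp
    ultimately have j0: "j \<noteq> 0" using j by (metis)
    have lt: "j + 1 < k" using jk j k j0 by (simp add: k_def)
    have e1: "{p ! (j-1), p ! j} \<in> A"
    proof -
      have "Suc (j-1) < length p" using j j0 by simp
      then have "{p ! (j-1), p ! Suc (j-1)} \<in> path_edges p" by (rule pe_idx)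
      then show ?thesis using pA j0 by auto
    qed
    have e2: "{p ! j, p ! (j+1)} \<in> A"
    proof -
      have "Suc j < length p" using lt k by simp
      then have "{p ! j, p ! Suc j} \<in> path_edges p" by (rule pe_idx)
      then show ?thesis using pA by auto
    qed
    have e3: "{p ! j, L} \<in> A" using x(2) j by (simp add: insert_commute)
    have d1: "p ! (j+1) \<noteq> p ! (j-1)" using nth_eq_iff_index_eq[OF pd, of "j+1" "j-1"] lt k j0 by simp
    have "L = p ! (j-1) \<or> L = p ! (j+1)"
      by (rule nb3[of "p ! j"]) (use xV j e1 e2 e3 d1 in \<open>auto simp: insert_commute\<close>)
    moreover have "L \<noteq> p ! (j-1)" using nth_eq_iff_index_eq[OF pd, of k "j-1"] k lt by simp
    moreover have "L \<noteq> p ! (j+1)" using nth_eq_iff_index_eq[OF pd, of k "j+1"] k lt by simp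
    ultimately show False by simp
  qed
  have qne: "q \<noteq> []"
  proof
    assume "q = []"
    then have "M = z" unfolding M_def k_def p_def by simp
    then show False using x(1) xz by simp
  qed
  have pl3: "3 \<le> length p" using qne unfolding p_def by (cases q) auto
  have LzA: "{L, z} \<in> A" using x(2) xz by simp
  have ce: "cycle_edges p = insert {L, z} (path_edges p)"
    using cycle_edges_pe[of p] pl L_def unfolding p_def by simp
  have ceA: "cycle_edges p \<subseteq> A" using ce pA LzA by auto
  have clo: "{v,u} \<in> cycle_edges p" if "v \<in> set p" "{v,u} \<in> A" for v u
    using cyc_closed[OF pd pl3 ceA that(1) _ that(2)] that(1) pV by auto
  have wp: "w \<in> set p" unfolding p_def by simp
  have R: "reach A w = set p"
  proof
    show "reach A w \<subseteq> set p"
    proof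
      fix v assume "v \<in> reach A w"
      then have "(w,v) \<in> (adj A)\<^sup>*" unfolding reach_def by simp
      then show "v \<in> set p"
      proof (induction rule: rtrancl_induct)
        case base then show ?case using wp .
      next
        case (step y u)
        then have "{y,u} \<in> A" by (simp add: adj_def)
        then have "{y,u} \<in> cycle_edges p" using clo step.IH by blast
        then show ?case using cycle_edges_subset by blast
      qed
    qed
  next
    show "set p \<subseteq> reach A w"
    proof
      fix v assume "v \<in> set p"
      then have "(w,v) \<in> (adj (path_edges p))\<^sup>*" using conn_path[OF pne] wp unfolding conn_def by blast
      then show "v \<in> reach A w" unfolding reach_def using rt_mono[OF pA] by blast
    qed
  qed
  have CE: "comp_edges A w = cycle_edges p"
  proof
    show "comp_edges A w \<subseteq> cycle_edges p"
    proof
      fix e assume "e \<in> comp_edges A w"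
      then have e: "e \<in> A" "e \<subseteq> set p" unfolding comp_edges_def R by auto
      obtain a' b' where "e = {a',b'}" using edgeE e AE by blast
      then show "e \<in> cycle_edges p" using clo e by auto
    qed
  next
    show "cycle_edges p \<subseteq> comp_edges A w"
      unfolding comp_edges_def R using ceA cycle_edges_subset by blast
  qed
  define c where "c = w # q @ [z]"
  have lastwq: "last (w # q) = L" unfolding L_def p_def by simp
  have pec: "path_edges c = insert {L, z} (path_edges (w # q))"
    unfolding c_def using pe_snoc1[of "w#q" z] lastwq by simp
  have pep: "path_edges p = insert {z, w} (path_edges (w # q))"
    unfolding p_def by (cases q) auto
  have "cyc A w z c"
    unfolding cyc_def
  proof (intro conjI)
    show "distinct c" using pd unfolding c_def p_def by auto
    show "3 \<le> length c" using pl3 unfolding c_def p_def by simp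
    show "hd c = w" unfolding c_def by simp
    show "last c = z" unfolding c_def by simp
    show "reach A w = set c" using R unfolding c_def p_def by auto
    show "comp_edges A w = insert {w, z} (path_edges c)"
      using CE ce pec pep by (auto simp: insert_commute)
    show "path_edges c \<subseteq> A" using pec pep pA LzA by auto
    show "{w, z} \<in> A" using wz .
  qed
  then show ?thesis by blast
qed

end

lemma interior_mid[simp]: "interior (a # m @ [b]) = set m"
  unfolding interior_def by simp

lemma interior_two[simp]: "interior [a, b] = {}"
  unfolding interior_def by simp

lemma len_ge1[simp]: "xs \<noteq> [] \<Longrightarrow> Suc 0 \<le> length xs" by (cases xs) auto

lemma ins_diff: "r \<notin> X \<Longrightarrow> r \<notin> Y \<Longrightarrow> (insert r X \<union> Y) - {r} = X \<union> Y" by auto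

context TF begin

lemma comp_shape:
  assumes AddE: "Add \<subseteq> E" and AddW: "\<forall>e\<in>Add. e \<subseteq> W"
    and W: "W = reach A a1 \<union> reach A a2"
    and B: "B = (A \<union> Add) - Rem"
    and F: "F = (comp_edges A a1 \<union> comp_edges A a2 \<union> Add) - Rem"
    and S: "S W F" and Sc: "\<And>W F. S W F \<Longrightarrow> conn F W" and w: "w \<in> W"
  shows "S (comp_verts B w) (comp_edges B w)"
proof -
  have "reach B w = W \<and> comp_edges B w = F"
    by (rule comp_generic[OF sg AE AddE AddW W B F Sc[OF S] w])
  then show ?thesis using S unfolding comp_verts_def by simp
qed

lemma cycE: assumes "cyc A w z c"
  shows "distinct c" "3 \<le> length c" "hd c = w" "last c = z" "reach A w = set c"
    "comp_edges A w = insert {w,z} (path_edges c)" "path_edges c \<subseteq> A" "{w,z} \<in> A"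
  using assms unfolding cyc_def by auto

lemma cyc_split_nonadj:
  assumes c: "cyc A x y c" and z: "z \<in> set c" and zx: "z \<noteq> x" and xzA: "{x,z} \<notin> A"
  shows "\<exists>xs' ys. c = x # xs' @ z # ys \<and> xs' \<noteq> []"
proof -
  obtain xs ys where s: "c = xs @ z # ys" using split_list[OF z] by blast
  have "xs \<noteq> []" using s zx cycE(3)[OF c] by auto
  then obtain xs' where xs: "xs = x # xs'" using s cycE(3)[OF c] by (cases xs) auto
  have "xs' \<noteq> []"
  proof
    assume "xs' = []"
    then have "{x,z} \<in> path_edges c" using s xs by simp
    then show False using cycE(7)[OF c] xzA by auto
  qed
  then show ?thesis using s xs by (intro exI[of _ xs'] exI[of _ ys]) simp
qed

lemma cyc_split_nonlast:
  assumes c: "cyc A x y c" and s: "c = xs @ z # ys" and zy: "z \<noteq> y"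
  shows "ys \<noteq> []"
  using s zy cycE(4)[OF c] by auto

end

context TF begin

lemma nbV: "{a,b} \<in> A \<Longrightarrow> a \<noteq> b \<and> a \<in> V \<and> b \<in> V" using edge2 AE by blast

lemma cyc_edges_sub: "cyc A w z c \<Longrightarrow> e \<in> insert {w,z} (path_edges c) \<Longrightarrow> e \<subseteq> set c"
  using pe_subset cycE(3,4) by (metis insert_iff empty_subsetI hd_in_set insert_subset last_in_set list.size(3) not_numeral_le_zero cycE(2))

lemma T_shape:
  assumes x: "x \<in> V" and xy: "{x,y} \<in> A" and xx': "{x,x'} \<in> E" "{x,x'} \<notin> A"
    and w: "w \<in> reach A x \<union> reach A x'"
  shows "tadpole_graph (comp_verts (insert {x,x'} A - {{x,y}}) w) (comp_edges (insert {x,x'} A - {{x,y}}) w)"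
proof -
  obtain c where c: "cyc A x y c" using core[OF x xy] by blast
  note C = cycE[OF c]
  have x'V: "x' \<in> V" "x' \<noteq> x" using edge2[OF xx'(1)] by auto
  have x'y: "x' \<noteq> y" using xy xx'(2) by auto
  have B: "insert {x,x'} A - {{x,y}} = (A \<union> {{x,x'}}) - {{x,y}}" by auto
  have xyc: "{x,y} \<notin> path_edges c" using hd_last_not_pe[OF C(1,2)] C(3,4) by simp
  have xyne: "{x,y} \<noteq> {x,x'}" using x'y by (auto simp: doubleton_eq_iff)
  have xc: "x \<in> set c" using C(5) reach_self by metis
  show ?thesis
  proof (cases "x' \<in> set c")
    case True
    obtain xs' ys where s: "c = x # xs' @ x' # ys" "xs' \<noteq> []"
      using cyc_split_nonadj[OF c True x'V(2) xx'(2)] by blast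
    have ys: "ys \<noteq> []" using cyc_split_nonlast[OF c _ x'y, of "x # xs'" ys] s by simp
    define cc where "cc = x # xs' @ [x']"
    define p where "p = x' # ys"
    have dc: "distinct c" using C(1) .
    have W: "set c = reach A x \<union> reach A x" using C(5) by simp
    have pec: "path_edges c = path_edges cc \<union> path_edges p"
      unfolding cc_def p_def s(1) using pe_append[of "x # xs'" x' ys] by simp
    have cce: "cycle_edges cc = insert {x', x} (path_edges cc)"
      using cycle_edges_pe[of cc] s(2) unfolding cc_def by simp
    have T: "tadpole_graph (set c) ((comp_edges A x \<union> comp_edges A x \<union> {{x,x'}}) - {{x,y}})"
      unfolding tadpole_graph_def
    proof (intro exI conjI)
      have l1: "1 \<le> length xs'" using s(2) by (cases xs') auto
      show "is_cycle cc" unfolding is_cycle_def cc_def using dc s l1 by auto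
      show "is_path p" unfolding is_path_def p_def using dc s ys by auto
      show "set p \<inter> set cc = {hd p}" unfolding p_def cc_def using dc s by auto
      show "set c = set cc \<union> set p" unfolding p_def cc_def s by auto
      have "(comp_edges A x \<union> comp_edges A x \<union> {{x,x'}}) - {{x,y}} = path_edges c \<union> {{x,x'}}"
        using C(6) ins_diff[OF xyc] xyne by auto
      then show "(comp_edges A x \<union> comp_edges A x \<union> {{x,x'}}) - {{x,y}} = cycle_edges cc \<union> path_edges p"
        using pec cce by (auto simp: insert_commute)
    qed
    have wc: "w \<in> set c" using w True C(5) reach_eq[of x' A x] by auto
    show ?thesis
      by (rule comp_shape[where S=tadpole_graph and Add="{{x,x'}}" and Rem="{{x,y}}", OF _ _ W B _ T conn_tadpole wc]) (use xx' True xc in auto)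
  next
    case False
    obtain w' where w': "{x',w'} \<in> A" using Aedges_at[OF x'V(1)] by blast
    obtain d where d: "cyc A x' w' d" using core[OF x'V(1) w'] by blast
    note D = cycE[OF d]
    have disj: "set c \<inter> set d = {}" using reach_disj[of x' A x] False C(5) D(5) by simp
    have x'd: "x' \<in> set d" using D(5) reach_self by metis
    have xd: "x \<notin> set d" using disj C(1,2,3) by (metis disjoint_iff hd_in_set list.size(3) not_numeral_le_zero)
    define p where "p = x' # c"
    have W: "set d \<union> set p = reach A x \<union> reach A x'" unfolding p_def using C(5) D(5) x'd by auto
    have xyd: "{x,y} \<notin> insert {x',w'} (path_edges d)" using cyc_edges_sub[OF d] xd by blast
    have pep: "path_edges p = insert {x', x} (path_edges c)"
    proof -
      have "c \<noteq> []" using C(2) by auto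
      then show ?thesis unfolding p_def using pe_Cons_nonempty[of c x'] C(3) by simp
    qed
    have de: "cycle_edges d = insert {w', x'} (path_edges d)"
      using cycle_edges_pe[of d] D(2,3,4) by simp
    have T: "tadpole_graph (set d \<union> set p) ((comp_edges A x \<union> comp_edges A x' \<union> {{x,x'}}) - {{x,y}})"
      unfolding tadpole_graph_def
    proof (intro exI conjI)
      show "is_cycle d" unfolding is_cycle_def using D by auto
      show "is_path p" unfolding is_path_def p_def using C False by auto
      show "set p \<inter> set d = {hd p}" unfolding p_def using disj x'd by auto
      show "set d \<union> set p = set d \<union> set p" ..
      have "(comp_edges A x \<union> comp_edges A x' \<union> {{x,x'}}) - {{x,y}}
            = path_edges c \<union> insert {x',w'} (path_edges d) \<union> {{x,x'}}"
        using C(6) D(6) xyc xyd xyne by auto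
      then show "(comp_edges A x \<union> comp_edges A x' \<union> {{x,x'}}) - {{x,y}} = cycle_edges d \<union> path_edges p"
        using pep de by (auto simp: insert_commute)
    qed
    have wc: "w \<in> set d \<union> set p" using w W by simp
    show ?thesis
      by (rule comp_shape[where S=tadpole_graph and Add="{{x,x'}}" and Rem="{{x,y}}", OF _ _ W B _ T conn_tadpole wc]) (use xx' x'd xc in \<open>auto simp: p_def\<close>)
  qed
qed

end

context TF begin

lemma U_shape:
  assumes x: "x \<in> V" and xz: "{x,z} \<in> E" "{x,z} \<notin> A"
    and w: "w \<in> reach A x \<union> reach A z"
  shows "theta_graph (comp_verts (insert {x,z} A) w) (comp_edges (insert {x,z} A) w) \<or>
         dumbbell_graph (comp_verts (insert {x,z} A) w) (comp_edges (insert {x,z} A) w)"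
proof -
  obtain y where xy: "{x,y} \<in> A" using Aedges_at[OF x] by blast
  obtain c where c: "cyc A x y c" using core[OF x xy] by blast
  note C = cycE[OF c]
  have zV: "z \<in> V" "z \<noteq> x" using edge2[OF xz(1)] by auto
  have zy: "z \<noteq> y" using xy xz(2) by auto
  have B: "insert {x,z} A = (A \<union> {{x,z}}) - {}" by auto
  have xc: "x \<in> set c" using C(5) reach_self by metis
  have ce: "cycle_edges c = insert {y, x} (path_edges c)"
    using cycle_edges_pe[of c] C(2,3,4) by simp
  show ?thesis
  proof (cases "z \<in> set c")
    case True
    obtain xs' ys where s: "c = x # xs' @ z # ys" "xs' \<noteq> []"
      using cyc_split_nonadj[OF c True zV(2) xz(2)] by blast
    have ys: "ys \<noteq> []" using cyc_split_nonlast[OF c _ zy, of "x # xs'" ys] s by simp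
    have lys: "last ys = y" using C(4) s ys by simp
    have dc: "distinct c" using C(1) .
    have W: "set c = reach A x \<union> reach A x" using C(5) by simp
    define p2 where "p2 = x # xs' @ [z]"
    define p3 where "p3 = x # rev ys @ [z]"
    have pec: "path_edges c = path_edges p2 \<union> path_edges (z # ys)"
      unfolding p2_def s(1) using pe_append[of "x # xs'" z ys] by simp
    have pe3: "path_edges p3 = insert {x, y} (path_edges (z # ys))"
    proof -
      have "rev ys @ [z] \<noteq> []" by simp
      then have "path_edges p3 = insert {x, hd (rev ys @ [z])} (path_edges (rev ys @ [z]))"
        unfolding p3_def by (rule pe_Cons_nonempty)
      moreover have "hd (rev ys @ [z]) = y" using ys lys by (simp add: hd_rev)
      moreover have "path_edges (rev ys @ [z]) = path_edges (z # ys)"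
        using pe_rev[of "z # ys"] by simp
      ultimately show ?thesis by simp
    qed
    have T: "theta_graph (set c) ((comp_edges A x \<union> comp_edges A x \<union> {{x,z}}) - {})"
      unfolding theta_graph_def
    proof (intro exI conjI)
      show "x \<noteq> z" using zV by simp
      show "is_path [x,z]" unfolding is_path_def using zV by simp
      show "is_path p2" unfolding is_path_def p2_def using dc s by auto
      show "is_path p3" unfolding is_path_def p3_def using dc s by auto
      show "hd [x,z] = x" "hd p2 = x" "hd p3 = x" "last [x,z] = z" "last p2 = z" "last p3 = z"
        unfolding p2_def p3_def by simp_all
      show "[x,z] \<noteq> p2" unfolding p2_def using s(2) by auto
      show "[x,z] \<noteq> p3" unfolding p3_def using ys by auto
      show "p2 \<noteq> p3"
      proof
        assume "p2 = p3"
        then have "xs' = rev ys" unfolding p2_def p3_def by simp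
        then have "set xs' = set ys" by simp
        then show False using dc s ys by (cases ys) auto
      qed
      show "interior [x,z] \<inter> set p2 = {}" "interior [x,z] \<inter> set p3 = {}" by simp_all
      show "interior p2 \<inter> set [x,z] = {}" "interior p2 \<inter> set p3 = {}"
        unfolding p2_def p3_def using dc s by auto
      show "interior p3 \<inter> set [x,z] = {}" "interior p3 \<inter> set p2 = {}"
        unfolding p2_def p3_def using dc s by auto
      show "set c = set [x,z] \<union> set p2 \<union> set p3" unfolding p2_def p3_def s by auto
      show "(comp_edges A x \<union> comp_edges A x \<union> {{x,z}}) - {} = path_edges [x,z] \<union> path_edges p2 \<union> path_edges p3"
        using C(6) pec pe3 by auto
    qed
    have wc: "w \<in> set c" using w True C(5) reach_eq[of z A x] by auto
    have "theta_graph (comp_verts (insert {x,z} A) w) (comp_edges (insert {x,z} A) w)"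
      by (rule comp_shape[where S=theta_graph and Add="{{x,z}}" and Rem="{}", OF _ _ W B _ T conn_theta wc])
         (use xz True xc in auto)
    then show ?thesis by simp
  next
    case False
    obtain w' where w': "{z,w'} \<in> A" using Aedges_at[OF zV(1)] by blast
    obtain d where d: "cyc A z w' d" using core[OF zV(1) w'] by blast
    note D = cycE[OF d]
    have disj: "set c \<inter> set d = {}" using reach_disj[of z A x] False C(5) D(5) by simp
    have zd: "z \<in> set d" using D(5) reach_self by metis
    have W: "set c \<union> set d \<union> set [x,z] = reach A x \<union> reach A z" using C(5) D(5) zd xc by auto
    have de: "cycle_edges d = insert {w', z} (path_edges d)"
      using cycle_edges_pe[of d] D(2,3,4) by simp
    have T: "dumbbell_graph (set c \<union> set d \<union> set [x,z]) ((comp_edges A x \<union> comp_edges A z \<union> {{x,z}}) - {})"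
      unfolding dumbbell_graph_def
    proof (intro exI conjI)
      show "is_cycle c" unfolding is_cycle_def using C by auto
      show "is_cycle d" unfolding is_cycle_def using D by auto
      show "is_path [x,z]" unfolding is_path_def using zV by simp
      show "set c \<inter> set d = {}" using disj .
      show "hd [x,z] \<in> set c" using xc by simp
      show "last [x,z] \<in> set d" using zd by simp
      show "interior [x,z] \<inter> (set c \<union> set d) = {}" by simp
      show "set c \<union> set d \<union> set [x,z] = set c \<union> set d \<union> set [x,z]" ..
      show "(comp_edges A x \<union> comp_edges A z \<union> {{x,z}}) - {} = cycle_edges c \<union> cycle_edges d \<union> path_edges [x,z]"
        using C(6) D(6) ce de by (auto simp: insert_commute)
    qed
    have wc: "w \<in> set c \<union> set d \<union> set [x,z]" using w W by simp
    have "dumbbell_graph (comp_verts (insert {x,z} A) w) (comp_edges (insert {x,z} A) w)"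
      by (rule comp_shape[where S=dumbbell_graph and Add="{{x,z}}" and Rem="{}", OF _ _ W B _ T conn_dumbbell wc])
         (use xz zd xc in auto)
    then show ?thesis by simp
  qed
qed

end

lemma comp_generic3:
  assumes sg: "simple_graph V E" and AE: "A \<subseteq> E" and AddE: "Add \<subseteq> E"
    and AddW: "\<forall>e\<in>Add. e \<subseteq> W"
    and W: "W = reach A a1 \<union> reach A a2 \<union> reach A a3"
    and B: "B = (A \<union> Add) - Rem"
    and F: "F = (comp_edges A a1 \<union> comp_edges A a2 \<union> comp_edges A a3 \<union> Add) - Rem"
    and cF: "conn F W" and w: "w \<in> W"
  shows "reach B w = W \<and> comp_edges B w = F"
proof -
  have FB: "F \<subseteq> B" unfolding F B comp_edges_def by auto
  have WR: "W \<subseteq> reach B w"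
  proof
    fix z assume "z \<in> W"
    then have "(w,z) \<in> (adj F)\<^sup>*" using cF w unfolding conn_def by blast
    then show "z \<in> reach B w" unfolding reach_def using rt_mono[OF FB] by blast
  qed
  have RW: "reach B w \<subseteq> W"
  proof
    fix z assume "z \<in> reach B w"
    then have "(w,z) \<in> (adj B)\<^sup>*" unfolding reach_def by simp
    then show "z \<in> W"
    proof (induction rule: rtrancl_induct)
      case base then show ?case using w .
    next
      case (step y z)
      then have yz: "{y,z} \<in> B" by (simp add: adj_def)
      show ?case
      proof (cases "{y,z} \<in> Add")
        case True then show ?thesis using AddW by auto
      next
        case False
        then have yzA: "{y,z} \<in> A" using yz B by auto
        have "y \<in> reach A a1 \<or> y \<in> reach A a2 \<or> y \<in> reach A a3" using step.IH W by auto
        then have "z \<in> reach A a1 \<or> z \<in> reach A a2 \<or> z \<in> reach A a3" using reach_step[OF _ yzA] by blast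
        then show ?thesis using W by auto
      qed
    qed
  qed
  have R: "reach B w = W" using WR RW by blast
  have "comp_edges B w = F"
  proof
    show "F \<subseteq> comp_edges B w"
    proof
      fix e assume e: "e \<in> F"
      have "e \<subseteq> W"
      proof (cases "e \<in> Add")
        case True then show ?thesis using AddW by auto
      next
        case False then have "e \<in> comp_edges A a1 \<union> comp_edges A a2 \<union> comp_edges A a3" using e F by auto
        then show ?thesis unfolding comp_edges_def W by auto
      qed
      then show "e \<in> comp_edges B w" using e FB R unfolding comp_edges_def by auto
    qed
  next
    show "comp_edges B w \<subseteq> F"
    proof
      fix e assume e: "e \<in> comp_edges B w"
      then have eB: "e \<in> B" and eW: "e \<subseteq> W" using R unfolding comp_edges_def by auto
      show "e \<in> F"
      proof (cases "e \<in> Add")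
        case True then show ?thesis using eB B F by auto
      next
        case False
        then have eA: "e \<in> A" "e \<notin> Rem" using eB B by auto
        obtain p q where pq: "e = {p,q}" using sg_edge[OF sg] eA AE by blast
        have "p \<in> W" using eW pq by auto
        then have "p \<in> reach A a1 \<or> p \<in> reach A a2 \<or> p \<in> reach A a3" using W by auto
        moreover have pqA: "{p,q} \<in> A" using eA pq by simp
        ultimately have "(p \<in> reach A a1 \<and> q \<in> reach A a1) \<or> (p \<in> reach A a2 \<and> q \<in> reach A a2)
            \<or> (p \<in> reach A a3 \<and> q \<in> reach A a3)"
          using reach_step[OF _ pqA] by blast
        then have "e \<in> comp_edges A a1 \<or> e \<in> comp_edges A a2 \<or> e \<in> comp_edges A a3"
          using eA pq unfolding comp_edges_def by auto
        then show ?thesis using eA F by auto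
      qed
    qed
  qed
  then show ?thesis using R by simp
qed

lemma comp_edges_eq: "b \<in> reach A a \<Longrightarrow> comp_edges A b = comp_edges A a"
  unfolding comp_edges_def using reach_eq by metis

context TF begin

lemma S_apply:
  assumes xx': "{x,x'} \<in> E" and yy': "{y,y'} \<in> E"
    and Wd: "W = reach A x \<union> reach A x' \<union> reach A y'"
    and Fd: "F = (comp_edges A x \<union> comp_edges A x' \<union> comp_edges A y' \<union> {{x,x'},{y,y'}}) - {{x,y}}"
    and yW: "y \<in> W"
    and S: "S W F" and Sc: "\<And>W F. S W F \<Longrightarrow> conn F W" and w: "w \<in> W"
  shows "S (comp_verts (insert {y,y'} (insert {x,x'} A) - {{x,y}}) w) (comp_edges (insert {y,y'} (insert {x,x'} A) - {{x,y}}) w)"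
proof -
  have B: "insert {y,y'} (insert {x,x'} A) - {{x,y}} = (A \<union> {{x,x'},{y,y'}}) - {{x,y}}" by auto
  have AddW: "\<forall>e\<in>{{x,x'},{y,y'}}. e \<subseteq> W" using yW Wd reach_self by fastforce
  have "reach (insert {y,y'} (insert {x,x'} A) - {{x,y}}) w = W \<and> comp_edges (insert {y,y'} (insert {x,x'} A) - {{x,y}}) w = F"
    by (rule comp_generic3[OF sg AE _ AddW Wd B Fd Sc[OF S] w]) (use xx' yy' in auto)
  then show ?thesis using S unfolding comp_verts_def by simp
qed

end

lemma not_len_ge1[simp]: "(\<not> Suc 0 \<le> length xs) = (xs = [])" by (cases xs) auto

context TF begin

lemma S_facts:
  assumes x: "x \<in> V" and xy: "{x,y} \<in> A" and xx': "{x,x'} \<in> E" "{x,x'} \<notin> A"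
    and yy': "{y,y'} \<in> E" "{y,y'} \<notin> A"
  shows "x' \<in> V" "y' \<in> V" "y \<in> V" "x' \<noteq> x" "y' \<noteq> y" "x \<noteq> y" "x' \<noteq> y" "y' \<noteq> x" "x' \<noteq> y'"
proof -
  show "x' \<in> V" "x' \<noteq> x" using edge2[OF xx'(1)] by auto
  show "y' \<in> V" "y' \<noteq> y" "y \<in> V" using edge2[OF yy'(1)] by auto
  show "x \<noteq> y" using nbV[OF xy] by simp
  show "x' \<noteq> y" using xy xx'(2) by auto
  show "y' \<noteq> x" using xy yy'(2) by (auto simp: insert_commute)
  show "x' \<noteq> y'"
  proof
    assume e: "x' = y'"
    have "x = y"
      by (rule nonA_unique[of x' x y]) (use e edge2[OF xx'(1)] xx' yy' in \<open>auto simp: insert_commute\<close>)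
    then show False using nbV[OF xy] by simp
  qed
qed

lemma S1a:
  assumes x: "x \<in> V" and xy: "{x,y} \<in> A" and xx': "{x,x'} \<in> E" "{x,x'} \<notin> A"
    and yy': "{y,y'} \<in> E" "{y,y'} \<notin> A"
    and c: "cyc A x y c" and s: "c = x # xs' @ x' # ms @ y' # ys" and xs': "xs' \<noteq> []"
  shows "dumbbell_graph (reach A x \<union> reach A x' \<union> reach A y')
           ((comp_edges A x \<union> comp_edges A x' \<union> comp_edges A y' \<union> {{x,x'},{y,y'}}) - {{x,y}})"
proof -
  note C = cycE[OF c]
  note f = S_facts[OF x xy xx' yy']
  have dc: "distinct c" using C(1) .
  have ys: "ys \<noteq> []" using C(4) s f(5) by auto
  have lys: "last ys = y" using C(4) s ys by simp
  define c1 where "c1 = x # xs' @ [x']"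
  define c2 where "c2 = y' # ys"
  define p where "p = x' # ms @ [y']"
  have pec: "path_edges c = path_edges c1 \<union> path_edges p \<union> path_edges c2"
  proof -
    have "path_edges c = path_edges c1 \<union> path_edges (x' # ms @ y' # ys)"
      unfolding s c1_def using pe_append[of "x # xs'" x' "ms @ y' # ys"] by simp
    moreover have "path_edges (x' # ms @ y' # ys) = path_edges p \<union> path_edges c2"
      unfolding p_def c2_def using pe_append[of "x' # ms" y' ys] by simp
    ultimately show ?thesis by auto
  qed
  have l2: "2 \<le> length ys"
  proof (rule ccontr)
    assume "\<not> 2 \<le> length ys"
    then have "length ys = 1" using ys by (cases ys) simp_all
    then have "ys = [y]" using lys by (cases ys) auto
    then have "{y', y} \<in> path_edges c" using pec unfolding c2_def by auto
    then show False using C(7) yy'(2) by (auto simp: insert_commute)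
  qed
  have xc: "x' \<in> set c" "y' \<in> set c" using s by auto
  have R: "reach A x' = set c" "reach A y' = set c" using reach_eq[of _ A x] xc C(5) by auto
  have CE: "comp_edges A x' = comp_edges A x" "comp_edges A y' = comp_edges A x"
    using comp_edges_eq[of _ A x] xc C(5) by auto
  have xyc: "{x,y} \<notin> path_edges c" using hd_last_not_pe[OF C(1,2)] C(3,4) by simp
  have ne1: "{x,y} \<noteq> {x,x'}" "{x,y} \<noteq> {y,y'}" using f by (auto simp: doubleton_eq_iff)
  have Fe: "(comp_edges A x \<union> comp_edges A x' \<union> comp_edges A y' \<union> {{x,x'},{y,y'}}) - {{x,y}}
      = path_edges c \<union> {{x,x'},{y,y'}}"
    unfolding CE C(6) using xyc ne1 by auto
  have ce1: "cycle_edges c1 = insert {x', x} (path_edges c1)"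
    using cycle_edges_pe[of c1] xs' unfolding c1_def by simp
  have ce2: "cycle_edges c2 = insert {y, y'} (path_edges c2)"
    using cycle_edges_pe[of c2] ys lys unfolding c2_def by simp
  have "dumbbell_graph (set c) (path_edges c \<union> {{x,x'},{y,y'}})"
    unfolding dumbbell_graph_def
  proof (intro exI conjI)
    show "is_cycle c1" unfolding is_cycle_def c1_def using dc s xs' by auto
    show "is_cycle c2" unfolding is_cycle_def c2_def using dc s l2 by auto
    show "is_path p" unfolding is_path_def p_def using dc s by auto
    show "set c1 \<inter> set c2 = {}" unfolding c1_def c2_def using dc s by auto
    show "hd p \<in> set c1" unfolding p_def c1_def by simp
    show "last p \<in> set c2" unfolding p_def c2_def by simp
    show "interior p \<inter> (set c1 \<union> set c2) = {}" unfolding p_def c1_def c2_def using dc s by auto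
    show "set c = set c1 \<union> set c2 \<union> set p" unfolding p_def c1_def c2_def s by auto
    show "path_edges c \<union> {{x,x'},{y,y'}} = cycle_edges c1 \<union> cycle_edges c2 \<union> path_edges p"
      using pec ce1 ce2 by (auto simp: insert_commute)
  qed
  then show ?thesis using Fe R C(5) by simp
qed

end

context TF begin

lemma S1b:
  assumes x: "x \<in> V" and xy: "{x,y} \<in> A" and xx': "{x,x'} \<in> E" "{x,x'} \<notin> A"
    and yy': "{y,y'} \<in> E" "{y,y'} \<notin> A"
    and c: "cyc A x y c" and s: "c = xs @ y' # ms @ x' # ys"
  shows "theta_graph (reach A x \<union> reach A x' \<union> reach A y')
           ((comp_edges A x \<union> comp_edges A x' \<union> comp_edges A y' \<union> {{x,x'},{y,y'}}) - {{x,y}})"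
proof -
  note C = cycE[OF c]
  note f = S_facts[OF x xy xx' yy']
  have dc: "distinct c" using C(1) .
  have xs: "xs \<noteq> []" using C(3) s f(8) by (cases xs) auto
  have hxs: "hd xs = x" using C(3) s xs by simp
  have xinxs: "x \<in> set xs" using hxs xs hd_in_set by metis
  have ys: "ys \<noteq> []" using C(4) s f(7) by auto
  have lys: "last ys = y" using C(4) s ys by simp
  have yinys: "y \<in> set ys" using lys ys last_in_set by metis
  define p1 where "p1 = y' # ms @ [x']"
  define p2 where "p2 = y' # rev xs @ [x']"
  define p3 where "p3 = y' # rev ys @ [x']"
  have pec: "path_edges c = path_edges (xs @ [y']) \<union> path_edges p1 \<union> path_edges (x' # ys)"
  proof -
    have "path_edges c = path_edges (xs @ [y']) \<union> path_edges (y' # ms @ x' # ys)"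
      unfolding s using pe_append[of xs y' "ms @ x' # ys"] by simp
    moreover have "path_edges (y' # ms @ x' # ys) = path_edges p1 \<union> path_edges (x' # ys)"
      unfolding p1_def using pe_append[of "y' # ms" x' ys] by simp
    ultimately show ?thesis by auto
  qed
  have pe2: "path_edges p2 = insert {x', x} (path_edges (xs @ [y']))"
  proof -
    have "p2 = rev (x' # xs @ [y'])" unfolding p2_def by simp
    then have "path_edges p2 = path_edges (x' # xs @ [y'])" using pe_rev by metis
    also have "\<dots> = insert {x', hd (xs @ [y'])} (path_edges (xs @ [y']))" by (rule pe_Cons_nonempty) simp
    finally show ?thesis using hxs xs by simp
  qed
  have pe3: "path_edges p3 = insert {y, y'} (path_edges (x' # ys))"
  proof -
    have "p3 = rev ((x' # ys) @ [y'])" unfolding p3_def by simp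
    then have "path_edges p3 = path_edges ((x' # ys) @ [y'])" using pe_rev by metis
    also have "\<dots> = insert {last (x' # ys), y'} (path_edges (x' # ys))" by (rule pe_snoc1) simp
    finally show ?thesis using lys ys by simp
  qed
  have xc: "x' \<in> set c" "y' \<in> set c" using s by auto
  have R: "reach A x' = set c" "reach A y' = set c" using reach_eq[of _ A x] xc C(5) by auto
  have CE: "comp_edges A x' = comp_edges A x" "comp_edges A y' = comp_edges A x"
    using comp_edges_eq[of _ A x] xc C(5) by auto
  have xyc: "{x,y} \<notin> path_edges c" using hd_last_not_pe[OF C(1,2)] C(3,4) by simp
  have ne1: "{x,y} \<noteq> {x,x'}" "{x,y} \<noteq> {y,y'}" using f by (auto simp: doubleton_eq_iff)
  have Fe: "(comp_edges A x \<union> comp_edges A x' \<union> comp_edges A y' \<union> {{x,x'},{y,y'}}) - {{x,y}}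
      = path_edges c \<union> {{x,x'},{y,y'}}"
    unfolding CE C(6) using xyc ne1 by auto
  have "theta_graph (set c) (path_edges c \<union> {{x,x'},{y,y'}})"
    unfolding theta_graph_def
  proof (intro exI conjI)
    show "y' \<noteq> x'" using f by simp
    show "is_path p1" unfolding is_path_def p1_def using dc s by auto
    show "is_path p2" unfolding is_path_def p2_def using dc s by auto
    show "is_path p3" unfolding is_path_def p3_def using dc s by auto
    show "hd p1 = y'" "hd p2 = y'" "hd p3 = y'" "last p1 = x'" "last p2 = x'" "last p3 = x'"
      unfolding p1_def p2_def p3_def by simp_all
    have xp1: "x \<notin> set p1" unfolding p1_def using dc s xinxs by auto
    have xp3: "x \<notin> set p3" unfolding p3_def using dc s xinxs by auto
    have yp1: "y \<notin> set p1" unfolding p1_def using dc s yinys by auto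
    show "p1 \<noteq> p2" using xp1 xinxs unfolding p2_def by auto
    show "p1 \<noteq> p3" using yp1 yinys unfolding p3_def by auto
    show "p2 \<noteq> p3" using xp3 xinxs unfolding p2_def by auto
    show "interior p1 \<inter> set p2 = {}" "interior p1 \<inter> set p3 = {}"
      "interior p2 \<inter> set p1 = {}" "interior p2 \<inter> set p3 = {}"
      "interior p3 \<inter> set p1 = {}" "interior p3 \<inter> set p2 = {}"
      unfolding p1_def p2_def p3_def using dc s by auto
    show "set c = set p1 \<union> set p2 \<union> set p3" unfolding p1_def p2_def p3_def s by auto
    show "path_edges c \<union> {{x,x'},{y,y'}} = path_edges p1 \<union> path_edges p2 \<union> path_edges p3"
      using pec pe2 pe3 by (auto simp: insert_commute)
  qed
  then show ?thesis using Fe R C(5) by simp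
qed

lemma S2:
  assumes x: "x \<in> V" and xy: "{x,y} \<in> A" and xx': "{x,x'} \<in> E" "{x,x'} \<notin> A"
    and yy': "{y,y'} \<in> E" "{y,y'} \<notin> A"
    and c: "cyc A x y c" and s: "c = x # xs' @ x' # ys" and xs': "xs' \<noteq> []" and y'c: "y' \<notin> set c"
  shows "dumbbell_graph (reach A x \<union> reach A x' \<union> reach A y')
           ((comp_edges A x \<union> comp_edges A x' \<union> comp_edges A y' \<union> {{x,x'},{y,y'}}) - {{x,y}})"
proof -
  note C = cycE[OF c]
  note f = S_facts[OF x xy xx' yy']
  have dc: "distinct c" using C(1) .
  have ys: "ys \<noteq> []" using C(4) s f(7) by auto
  have lys: "last ys = y" using C(4) s ys by simp
  obtain w' where w': "{y',w'} \<in> A" using Aedges_at[OF f(2)] by blast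
  obtain d where d: "cyc A y' w' d" using core[OF f(2) w'] by blast
  note D = cycE[OF d]
  have disj: "set c \<inter> set d = {}" using reach_disj[of y' A x] y'c C(5) D(5) by simp
  have y'd: "y' \<in> set d" using D(5) reach_self by metis
  have xd: "x \<notin> set d" using disj s by auto
  define c1 where "c1 = x # xs' @ [x']"
  define p where "p = x' # ys @ [y']"
  have pec: "path_edges c = path_edges c1 \<union> path_edges (x' # ys)"
    unfolding s c1_def using pe_append[of "x # xs'" x' ys] by simp
  have pep: "path_edges p = insert {y, y'} (path_edges (x' # ys))"
  proof -
    have "path_edges p = path_edges ((x' # ys) @ [y'])" unfolding p_def by simp
    also have "\<dots> = insert {last (x' # ys), y'} (path_edges (x' # ys))" by (rule pe_snoc1) simp
    finally show ?thesis using lys ys by simp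
  qed
  have xc: "x' \<in> set c" using s by auto
  have R: "reach A x' = set c" using reach_eq[of _ A x] xc C(5) by auto
  have CE: "comp_edges A x' = comp_edges A x" using comp_edges_eq[of _ A x] xc C(5) by auto
  have xyc: "{x,y} \<notin> path_edges c" using hd_last_not_pe[OF C(1,2)] C(3,4) by simp
  have xyd: "{x,y} \<notin> insert {y',w'} (path_edges d)" using cyc_edges_sub[OF d] xd by blast
  have ne1: "{x,y} \<noteq> {x,x'}" "{x,y} \<noteq> {y,y'}" using f by (auto simp: doubleton_eq_iff)
  have Fe: "(comp_edges A x \<union> comp_edges A x' \<union> comp_edges A y' \<union> {{x,x'},{y,y'}}) - {{x,y}}
      = path_edges c \<union> insert {y',w'} (path_edges d) \<union> {{x,x'},{y,y'}}"
    unfolding CE C(6) D(6) using xyc xyd ne1 by auto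
  have ce1: "cycle_edges c1 = insert {x', x} (path_edges c1)"
    using cycle_edges_pe[of c1] xs' unfolding c1_def by simp
  have ce2: "cycle_edges d = insert {w', y'} (path_edges d)"
    using cycle_edges_pe[of d] D(2,3,4) by simp
  have "dumbbell_graph (set c \<union> set d) (path_edges c \<union> insert {y',w'} (path_edges d) \<union> {{x,x'},{y,y'}})"
    unfolding dumbbell_graph_def
  proof (intro exI conjI)
    show "is_cycle c1" unfolding is_cycle_def c1_def using dc s xs' by auto
    show "is_cycle d" unfolding is_cycle_def using D by auto
    show "is_path p" unfolding is_path_def p_def using dc s y'c by auto
    show "set c1 \<inter> set d = {}" unfolding c1_def using disj s by auto
    show "hd p \<in> set c1" unfolding p_def c1_def by simp
    show "last p \<in> set d" unfolding p_def using y'd by simp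
    show "interior p \<inter> (set c1 \<union> set d) = {}" unfolding p_def c1_def using dc s disj by auto
    show "set c \<union> set d = set c1 \<union> set d \<union> set p" unfolding p_def c1_def s using y'd by auto
    show "path_edges c \<union> insert {y',w'} (path_edges d) \<union> {{x,x'},{y,y'}} = cycle_edges c1 \<union> cycle_edges d \<union> path_edges p"
      using pec pep ce1 ce2 by (auto simp: insert_commute)
  qed
  moreover have "reach A x \<union> reach A x' \<union> reach A y' = set c \<union> set d" using R C(5) D(5) by auto
  ultimately show ?thesis using Fe by simp
qed

end

context TF begin

lemma S4:
  assumes x: "x \<in> V" and xy: "{x,y} \<in> A" and xx': "{x,x'} \<in> E" "{x,x'} \<notin> A"
    and yy': "{y,y'} \<in> E" "{y,y'} \<notin> A"
    and c: "cyc A x y c" and x'c: "x' \<notin> set c" and y'c: "y' \<notin> set c" and y'x': "y' \<in> reach A x'"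
  shows "theta_graph (reach A x \<union> reach A x' \<union> reach A y')
           ((comp_edges A x \<union> comp_edges A x' \<union> comp_edges A y' \<union> {{x,x'},{y,y'}}) - {{x,y}})"
proof -
  note C = cycE[OF c]
  note f = S_facts[OF x xy xx' yy']
  have dc: "distinct c" using C(1) .
  have cne: "c \<noteq> []" using C(2) by auto
  obtain w' where w': "{x',w'} \<in> A" using Aedges_at[OF f(1)] by blast
  obtain d where d: "cyc A x' w' d" using core[OF f(1) w'] by blast
  note D = cycE[OF d]
  have dd: "distinct d" using D(1) .
  have disj: "set c \<inter> set d = {}" using reach_disj[of x' A x] x'c C(5) D(5) by simp
  have y'd: "y' \<in> set d" using D(5) y'x' by simp
  obtain ds es where ds: "d = ds @ y' # es" using split_list[OF y'd] by blast
  have dsne: "ds \<noteq> []" using ds D(3) f(9) by (cases ds) auto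
  obtain ds0 where ds0: "ds = x' # ds0" using dsne ds D(3) by (cases ds) auto
  have les: "last (y' # es) = w'" using D(4) ds by simp
  have xc: "x \<in> set c" using C(5) reach_self by metis
  have xd: "x \<notin> set d" using disj xc by blast
  define p1 where "p1 = x' # ds0 @ [y']"
  define p2 where "p2 = x' # rev es @ [y']"
  define p3 where "p3 = x' # c @ [y']"
  have ped: "path_edges d = path_edges p1 \<union> path_edges (y' # es)"
    unfolding ds ds0 p1_def using pe_append[of "x' # ds0" y' es] by simp
  have pe2: "path_edges p2 = insert {w', x'} (path_edges (y' # es))"
  proof -
    have "p2 = rev ((y' # es) @ [x'])" unfolding p2_def by simp
    then have "path_edges p2 = path_edges ((y' # es) @ [x'])" using pe_rev by metis
    also have "\<dots> = insert {last (y' # es), x'} (path_edges (y' # es))" by (rule pe_snoc1) simp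
    finally show ?thesis using les by simp
  qed
  have pe3: "path_edges p3 = insert {x', x} (insert {y, y'} (path_edges c))"
  proof -
    have "path_edges p3 = insert {x', hd (c @ [y'])} (path_edges (c @ [y']))"
      unfolding p3_def by (rule pe_Cons_nonempty) simp
    moreover have "path_edges (c @ [y']) = insert {last c, y'} (path_edges c)" by (rule pe_snoc1[OF cne])
    ultimately show ?thesis using C(3,4) cne by simp
  qed
  have R: "reach A y' = set d" using reach_eq[OF y'x'] D(5) by simp
  have CE: "comp_edges A y' = comp_edges A x'" using comp_edges_eq[OF y'x'] .
  have xyc: "{x,y} \<notin> path_edges c" using hd_last_not_pe[OF C(1,2)] C(3,4) by simp
  have xyd: "{x,y} \<notin> insert {x',w'} (path_edges d)" using cyc_edges_sub[OF d] xd by blast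
  have ne1: "{x,y} \<noteq> {x,x'}" "{x,y} \<noteq> {y,y'}" using f by (auto simp: doubleton_eq_iff)
  have Fe: "(comp_edges A x \<union> comp_edges A x' \<union> comp_edges A y' \<union> {{x,x'},{y,y'}}) - {{x,y}}
      = path_edges c \<union> insert {x',w'} (path_edges d) \<union> {{x,x'},{y,y'}}"
    unfolding CE C(6) D(6) using xyc xyd ne1 by auto
  have xs3: "x \<in> set p3" unfolding p3_def using C(3) cne by auto
  have "theta_graph (set c \<union> set d) (path_edges c \<union> insert {x',w'} (path_edges d) \<union> {{x,x'},{y,y'}})"
    unfolding theta_graph_def
  proof (intro exI conjI)
    show "x' \<noteq> y'" using f by simp
    show "is_path p1" unfolding is_path_def p1_def using dd ds ds0 by auto
    show "is_path p2" unfolding is_path_def p2_def using dd ds ds0 by auto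
    show "is_path p3" unfolding is_path_def p3_def using dc x'c y'c f by auto
    show "hd p1 = x'" "hd p2 = x'" "hd p3 = x'" "last p1 = y'" "last p2 = y'" "last p3 = y'"
      unfolding p1_def p2_def p3_def by simp_all
    show "p1 \<noteq> p2"
    proof
      assume "p1 = p2"
      then have "ds0 = rev es" unfolding p1_def p2_def by simp
      then have "set ds0 = set es" by simp
      moreover have "set ds0 \<inter> set es = {}" using dd ds ds0 by auto
      ultimately have "ds0 = []" "es = []" by auto
      then show False using D(2) ds ds0 by simp
    qed
    show "p1 \<noteq> p3" using xs3 xd ds ds0 unfolding p1_def by auto
    show "p2 \<noteq> p3" using xs3 xd ds ds0 unfolding p2_def by auto
    show "interior p1 \<inter> set p2 = {}" "interior p2 \<inter> set p1 = {}"
      unfolding p1_def p2_def using dd ds ds0 by auto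
    show "interior p1 \<inter> set p3 = {}" "interior p2 \<inter> set p3 = {}"
      unfolding p1_def p2_def p3_def using dd ds ds0 disj by auto
    show "interior p3 \<inter> set p1 = {}" "interior p3 \<inter> set p2 = {}"
      unfolding p1_def p2_def p3_def using ds ds0 disj by auto
    show "set c \<union> set d = set p1 \<union> set p2 \<union> set p3" unfolding p1_def p2_def p3_def ds ds0 by auto
    show "path_edges c \<union> insert {x',w'} (path_edges d) \<union> {{x,x'},{y,y'}} = path_edges p1 \<union> path_edges p2 \<union> path_edges p3"
      using ped pe2 pe3 by (auto simp: insert_commute)
  qed
  moreover have "reach A x \<union> reach A x' \<union> reach A y' = set c \<union> set d" using R C(5) D(5) by auto
  ultimately show ?thesis using Fe by simp
qed

lemma S5:
  assumes x: "x \<in> V" and xy: "{x,y} \<in> A" and xx': "{x,x'} \<in> E" "{x,x'} \<notin> A"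
    and yy': "{y,y'} \<in> E" "{y,y'} \<notin> A"
    and c: "cyc A x y c" and x'c: "x' \<notin> set c" and y'c: "y' \<notin> set c" and y'x': "y' \<notin> reach A x'"
  shows "dumbbell_graph (reach A x \<union> reach A x' \<union> reach A y')
           ((comp_edges A x \<union> comp_edges A x' \<union> comp_edges A y' \<union> {{x,x'},{y,y'}}) - {{x,y}})"
proof -
  note C = cycE[OF c]
  note f = S_facts[OF x xy xx' yy']
  have dc: "distinct c" using C(1) .
  have cne: "c \<noteq> []" using C(2) by auto
  obtain w' where w': "{x',w'} \<in> A" using Aedges_at[OF f(1)] by blast
  obtain d where d: "cyc A x' w' d" using core[OF f(1) w'] by blast
  note D = cycE[OF d]
  obtain w'' where w'': "{y',w''} \<in> A" using Aedges_at[OF f(2)] by blast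
  obtain e where e: "cyc A y' w'' e" using core[OF f(2) w''] by blast
  note Ee = cycE[OF e]
  have disj1: "set c \<inter> set d = {}" using reach_disj[of x' A x] x'c C(5) D(5) by simp
  have disj2: "set c \<inter> set e = {}" using reach_disj[of y' A x] y'c C(5) Ee(5) by simp
  have disj3: "set d \<inter> set e = {}" using reach_disj[of y' A x'] y'x' D(5) Ee(5) by simp
  have x'd: "x' \<in> set d" using D(5) reach_self by metis
  have y'e: "y' \<in> set e" using Ee(5) reach_self by metis
  have xc: "x \<in> set c" using C(5) reach_self by metis
  define p where "p = x' # c @ [y']"
  have pep: "path_edges p = insert {x', x} (insert {y, y'} (path_edges c))"
  proof -
    have "path_edges p = insert {x', hd (c @ [y'])} (path_edges (c @ [y']))"
      unfolding p_def by (rule pe_Cons_nonempty) simp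
    moreover have "path_edges (c @ [y']) = insert {last c, y'} (path_edges c)" by (rule pe_snoc1[OF cne])
    ultimately show ?thesis using C(3,4) cne by simp
  qed
  have xyc: "{x,y} \<notin> path_edges c" using hd_last_not_pe[OF C(1,2)] C(3,4) by simp
  have xyd: "{x,y} \<notin> insert {x',w'} (path_edges d)"
  proof
    assume "{x,y} \<in> insert {x',w'} (path_edges d)"
    then have "{x,y} \<subseteq> set d" by (rule cyc_edges_sub[OF d])
    then show False using xc disj1 by blast
  qed
  have xye: "{x,y} \<notin> insert {y',w''} (path_edges e)"
  proof
    assume "{x,y} \<in> insert {y',w''} (path_edges e)"
    then have "{x,y} \<subseteq> set e" by (rule cyc_edges_sub[OF e])
    then show False using xc disj2 by blast
  qed
  have ne1: "{x,y} \<noteq> {x,x'}" "{x,y} \<noteq> {y,y'}" using f by (auto simp: doubleton_eq_iff)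
  have Fe: "(comp_edges A x \<union> comp_edges A x' \<union> comp_edges A y' \<union> {{x,x'},{y,y'}}) - {{x,y}}
      = path_edges c \<union> insert {x',w'} (path_edges d) \<union> insert {y',w''} (path_edges e) \<union> {{x,x'},{y,y'}}"
    unfolding C(6) D(6) Ee(6) using xyc xyd xye ne1 by auto
  have ce1: "cycle_edges d = insert {w', x'} (path_edges d)"
    using cycle_edges_pe[of d] D(2,3,4) by simp
  have ce2: "cycle_edges e = insert {w'', y'} (path_edges e)"
    using cycle_edges_pe[of e] Ee(2,3,4) by simp
  have "dumbbell_graph (set c \<union> set d \<union> set e)
     (path_edges c \<union> insert {x',w'} (path_edges d) \<union> insert {y',w''} (path_edges e) \<union> {{x,x'},{y,y'}})"
    unfolding dumbbell_graph_def
  proof (intro exI conjI)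
    show "is_cycle d" unfolding is_cycle_def using D by auto
    show "is_cycle e" unfolding is_cycle_def using Ee by auto
    show "is_path p" unfolding is_path_def p_def using dc x'c y'c f by auto
    show "set d \<inter> set e = {}" using disj3 .
    show "hd p \<in> set d" unfolding p_def using x'd by simp
    show "last p \<in> set e" unfolding p_def using y'e by simp
    show "interior p \<inter> (set d \<union> set e) = {}" unfolding p_def using disj1 disj2 by auto
    show "set c \<union> set d \<union> set e = set d \<union> set e \<union> set p" unfolding p_def using x'd y'e by auto
    show "path_edges c \<union> insert {x',w'} (path_edges d) \<union> insert {y',w''} (path_edges e) \<union> {{x,x'},{y,y'}}
          = cycle_edges d \<union> cycle_edges e \<union> path_edges p"
      using pep ce1 ce2 by (auto simp: insert_commute)
  qed
  moreover have "reach A x \<union> reach A x' \<union> reach A y' = set c \<union> set d \<union> set e" using C(5) D(5) Ee(5) by auto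
  ultimately show ?thesis using Fe by simp
qed

end

context TF begin

lemma S_WF:
  assumes x: "x \<in> V" and xy: "{x,y} \<in> A" and xx': "{x,x'} \<in> E" "{x,x'} \<notin> A"
    and yy': "{y,y'} \<in> E" "{y,y'} \<notin> A"
  shows "theta_graph (reach A x \<union> reach A x' \<union> reach A y')
           ((comp_edges A x \<union> comp_edges A x' \<union> comp_edges A y' \<union> {{x,x'},{y,y'}}) - {{x,y}}) \<or>
         dumbbell_graph (reach A x \<union> reach A x' \<union> reach A y')
           ((comp_edges A x \<union> comp_edges A x' \<union> comp_edges A y' \<union> {{x,x'},{y,y'}}) - {{x,y}})"
proof -
  obtain c where c: "cyc A x y c" using core[OF x xy] by blast
  note C = cycE[OF c]
  note f = S_facts[OF x xy xx' yy']
  show ?thesis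
  proof (cases "x' \<in> set c")
    case x'c: True
    obtain xs' ys where s: "c = x # xs' @ x' # ys" "xs' \<noteq> []"
      using cyc_split_nonadj[OF c x'c f(4) xx'(2)] by blast
    show ?thesis
    proof (cases "y' \<in> set c")
      case True
      then have "y' \<in> set (x # xs') \<or> y' \<in> set ys" using s f(9) by auto
      then show ?thesis
      proof
        assume "y' \<in> set ys"
        then obtain ms ys2 where "ys = ms @ y' # ys2" using split_list by metis
        then have "c = x # xs' @ x' # ms @ y' # ys2" using s by simp
        from S1a[OF x xy xx' yy' c this s(2)] show ?thesis by simp
      next
        assume "y' \<in> set (x # xs')"
        then obtain xs ms where "x # xs' = xs @ y' # ms" using split_list by metis
        then have "c = xs @ y' # ms @ x' # ys" using s by simp
        from S1b[OF x xy xx' yy' c this] show ?thesis by simp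
      qed
    next
      case False
      from S2[OF x xy xx' yy' c s False] show ?thesis by simp
    qed
  next
    case x'c: False
    show ?thesis
    proof (cases "y' \<in> set c")
      case True
      have yx: "{y,x} \<in> A" using xy by (simp add: insert_commute)
      obtain c2 where c2: "cyc A y x c2" using core[OF f(3) yx] by blast
      note C2 = cycE[OF c2]
      have yr: "y \<in> reach A x" using reach_step[OF reach_self xy] .
      have Ry: "reach A y = reach A x" using reach_eq[OF yr] .
      have CEy: "comp_edges A y = comp_edges A x" using comp_edges_eq[OF yr] .
      have y'c2: "y' \<in> set c2" using True C(5) C2(5) Ry by simp
      have x'c2: "x' \<notin> set c2" using x'c C(5) C2(5) Ry by simp
      obtain xs' ys where s: "c2 = y # xs' @ y' # ys" "xs' \<noteq> []"
        using cyc_split_nonadj[OF c2 y'c2 f(5) yy'(2)] by blast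
      have "dumbbell_graph (reach A y \<union> reach A y' \<union> reach A x')
           ((comp_edges A y \<union> comp_edges A y' \<union> comp_edges A x' \<union> {{y,y'},{x,x'}}) - {{y,x}})"
        by (rule S2[OF f(3) yx yy' xx' c2 s x'c2])
      moreover have "reach A y \<union> reach A y' \<union> reach A x' = reach A x \<union> reach A x' \<union> reach A y'"
        using Ry by auto
      moreover have "(comp_edges A y \<union> comp_edges A y' \<union> comp_edges A x' \<union> {{y,y'},{x,x'}}) - {{y,x}}
          = (comp_edges A x \<union> comp_edges A x' \<union> comp_edges A y' \<union> {{x,x'},{y,y'}}) - {{x,y}}"
        using CEy by (auto simp: insert_commute)
      ultimately show ?thesis by simp
    next
      case y'c: False
      show ?thesis
      proof (cases "y' \<in> reach A x'")
        case True
        from S4[OF x xy xx' yy' c x'c y'c True] show ?thesis by simp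
      next
        case False
        from S5[OF x xy xx' yy' c x'c y'c False] show ?thesis by simp
      qed
    qed
  qed
qed

lemma S_shape:
  assumes x: "x \<in> V" and xy: "{x,y} \<in> A" and xx': "{x,x'} \<in> E" "{x,x'} \<notin> A"
    and yy': "{y,y'} \<in> E" "{y,y'} \<notin> A"
    and w: "w \<in> reach A x \<union> reach A x' \<union> reach A y'"
  shows "theta_graph (comp_verts (insert {y,y'} (insert {x,x'} A) - {{x,y}}) w) (comp_edges (insert {y,y'} (insert {x,x'} A) - {{x,y}}) w) \<or>
         dumbbell_graph (comp_verts (insert {y,y'} (insert {x,x'} A) - {{x,y}}) w) (comp_edges (insert {y,y'} (insert {x,x'} A) - {{x,y}}) w)"
proof -
  have yW: "y \<in> reach A x \<union> reach A x' \<union> reach A y'" using reach_step[OF reach_self xy] by simp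
  from S_WF[OF x xy xx' yy'] show ?thesis
  proof
    assume T: "theta_graph (reach A x \<union> reach A x' \<union> reach A y')
           ((comp_edges A x \<union> comp_edges A x' \<union> comp_edges A y' \<union> {{x,x'},{y,y'}}) - {{x,y}})"
    show ?thesis
      using S_apply[where S=theta_graph, OF xx'(1) yy'(1) refl refl yW T conn_theta w] by simp
  next
    assume T: "dumbbell_graph (reach A x \<union> reach A x' \<union> reach A y')
           ((comp_edges A x \<union> comp_edges A x' \<union> comp_edges A y' \<union> {{x,x'},{y,y'}}) - {{x,y}})"
    show ?thesis
      using S_apply[where S=dumbbell_graph, OF xx'(1) yy'(1) refl refl yW T conn_dumbbell w] by simp
  qed
qed

end

lemma deg_ins: "finite B \<Longrightarrow> e \<notin> B \<Longrightarrow> deg (insert e B) w = deg B w + (if w \<in> e then 1 else 0)"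
proof -
  assume f: "finite B" and e: "e \<notin> B"
  show ?thesis
  proof (cases "w \<in> e")
    case True
    then have "{e' \<in> insert e B. w \<in> e'} = insert e {e' \<in> B. w \<in> e'}" by auto
    then show ?thesis unfolding deg_def using f e True by simp
  next
    case False
    then have "{e' \<in> insert e B. w \<in> e'} = {e' \<in> B. w \<in> e'}" by auto
    then show ?thesis unfolding deg_def using False by simp
  qed
qed

lemma deg_del: "finite B \<Longrightarrow> e \<in> B \<Longrightarrow> deg (B - {e}) w = deg B w - (if w \<in> e then 1 else 0)"
proof -
  assume f: "finite B" and e: "e \<in> B"
  show ?thesis
  proof (cases "w \<in> e")
    case True
    then have "{e' \<in> B - {e}. w \<in> e'} = {e' \<in> B. w \<in> e'} - {e}" by auto
    moreover have "e \<in> {e' \<in> B. w \<in> e'}" using e True by simp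
    ultimately show ?thesis unfolding deg_def using f True by (simp add: card_Diff_singleton)
  next
    case False
    then have "{e' \<in> B - {e}. w \<in> e'} = {e' \<in> B. w \<in> e'}" by auto
    then show ?thesis unfolding deg_def using False by simp
  qed
qed

lemma symdiff_ins: "e \<notin> B \<Longrightarrow> (B - {e}) \<union> ({e} - B) = insert e B" by auto
lemma symdiff_del: "e \<in> B \<Longrightarrow> (B - {e}) \<union> ({e} - B) = B - {e}" by auto

context TF begin

lemma reach_V: "B \<subseteq> E \<Longrightarrow> u \<in> V \<Longrightarrow> reach B u \<subseteq> V"
proof
  fix z assume B: "B \<subseteq> E" and u: "u \<in> V" and "z \<in> reach B u"
  then have "(u,z) \<in> (adj B)\<^sup>*" unfolding reach_def by simp
  then show "z \<in> V"
  proof (induction rule: rtrancl_induct)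
    case base then show ?case using u .
  next
    case (step y z)
    then have "{y,z} \<in> E" using B by (auto simp: adj_def)
    then show ?case using edge2 by blast
  qed
qed

lemma st2:
  assumes B: "B \<subseteq> E" and uv: "u \<in> V" "v \<in> V" "u \<noteq> v"
    and d2: "\<forall>w\<in>V. w \<noteq> u \<and> w \<noteq> v \<longrightarrow> deg B w = 2"
    and ou: "odd (deg B u)" and ov: "odd (deg B v)" and s4: "4 \<le> deg B u + deg B v"
  shows "(B,u,v) \<in> states V E"
proof -
  have "bdry V B = {u,v}"
    unfolding bdry_def using uv d2 ou ov by auto
  moreover have "\<forall>w\<in>V. deg B w \<ge> 1"
  proof
    fix w assume w: "w \<in> V"
    show "deg B w \<ge> 1"
    proof (cases "w = u \<or> w = v")
      case True then show ?thesis using ou ov odd_pos by (auto simp: Suc_le_eq)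
    next
      case False then show ?thesis using d2 w by auto
    qed
  qed
  ultimately show ?thesis unfolding states_def using B uv s4 by auto
qed

lemma E_cls: "x \<in> V \<Longrightarrow> (A,x,x) \<in> cls_E V E"
proof -
  assume x: "x \<in> V"
  obtain y where xy: "{x,y} \<in> A" using Aedges_at[OF x] by blast
  obtain c where c: "cyc A x y c" using core[OF x xy] by blast
  note C = cycE[OF c]
  have st: "(A,x,x) \<in> states V E"
  proof -
    have "bdry V A = {}" unfolding bdry_def using degA by auto
    moreover have "\<forall>w\<in>V. deg A w \<ge> 1" using degA by simp
    ultimately show ?thesis unfolding states_def using AE x degA[OF x] by auto
  qed
  have "cycle_graph (comp_verts A x) (comp_edges A x)"
    unfolding cycle_graph_def comp_verts_def
  proof (intro exI conjI)
    show "is_cycle c" unfolding is_cycle_def using C by simp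
    show "reach A x = set c" using C(5) .
    show "comp_edges A x = cycle_edges c"
      using C(6) cycle_edges_pe[of c] C(2,3,4) by (simp add: insert_commute)
  qed
  then show ?thesis unfolding cls_E_def using st by simp
qed

lemma deg_ge2_TD:
  assumes B: "B \<subseteq> E" and u: "u \<in> V" and d2: "\<forall>w\<in>V. deg B w \<ge> 2" and d3: "deg B u \<ge> 3"
  shows "\<not> cycle_graph (comp_verts B u) (comp_edges B u) \<and> \<not> tadpole_graph (comp_verts B u) (comp_edges B u)"
proof (rule not_ET)
  show "finite B" using finite_subset[OF B finE] .
  show "\<forall>e\<in>B. \<exists>a b. e = {a, b}" using two_ed[OF B] .
  show "\<forall>w\<in>reach B u. 2 \<le> deg B w" using d2 reach_V[OF B u] by blast
  show "u \<in> reach B u" by (rule reach_self)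
  show "3 \<le> deg B u" using d3 .
qed

lemma U_cls:
  assumes x: "x \<in> V" and xz: "{x,z} \<in> E" "{x,z} \<notin> A"
  shows "(insert {x,z} A, z, x) \<in> cls_Theta V E \<union> cls_D V E"
    "(insert {x,z} A, z, x) \<notin> cls_E V E \<union> cls_T V E"
proof -
  have zV: "z \<in> V" "z \<noteq> x" using edge2[OF xz(1)] by auto
  let ?B = "insert {x,z} A"
  have BE: "?B \<subseteq> E" using AE xz by auto
  have dg: "deg ?B w = 2 + (if w \<in> {x,z} then 1 else 0)" if "w \<in> V" for w
    using deg_ins[OF finA xz(2), of w] degA[OF that] by simp
  have st: "(?B, z, x) \<in> states V E"
    by (rule st2[OF BE zV(1) x zV(2)]) (use dg zV x in auto)
  have d2: "\<forall>w\<in>V. deg ?B w \<ge> 2" using dg by simp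
  have d3: "deg ?B z \<ge> 3" using dg zV by simp
  have ne: "\<not> cycle_graph (comp_verts ?B z) (comp_edges ?B z) \<and> \<not> tadpole_graph (comp_verts ?B z) (comp_edges ?B z)"
    by (rule deg_ge2_TD[OF BE zV(1) d2 d3])
  have sh: "theta_graph (comp_verts ?B z) (comp_edges ?B z) \<or> dumbbell_graph (comp_verts ?B z) (comp_edges ?B z)"
    by (rule U_shape[OF x xz]) (simp add: reach_self)
  show "(?B, z, x) \<in> cls_Theta V E \<union> cls_D V E"
    using sh st unfolding cls_Theta_def cls_D_def by auto
  show "(?B, z, x) \<notin> cls_E V E \<union> cls_T V E"
    using ne unfolding cls_E_def cls_T_def by auto
qed

lemma T_cls:
  assumes x: "x \<in> V" and xy: "{x,y} \<in> A" and xx': "{x,x'} \<in> E" "{x,x'} \<notin> A"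
  shows "(insert {x,x'} A - {{x,y}}, x', y) \<in> cls_T V E"
    "(insert {x,x'} A - {{x,y}}, y, x') \<in> cls_T V E"
proof -
  have x'V: "x' \<in> V" "x' \<noteq> x" using edge2[OF xx'(1)] by auto
  have yV: "y \<in> V" "y \<noteq> x" using nbV[OF xy] by auto
  have x'y: "x' \<noteq> y" using xy xx'(2) by auto
  let ?B = "insert {x,x'} A - {{x,y}}"
  have BE: "?B \<subseteq> E" using AE xx' by auto
  have fin1: "finite (insert {x,x'} A)" using finA by simp
  have xyin: "{x,y} \<in> insert {x,x'} A" using xy by simp
  have dg: "deg ?B w = 2 + (if w \<in> {x,x'} then 1 else 0) - (if w \<in> {x,y} then 1 else 0)" if "w \<in> V" for w
    using deg_del[OF fin1 xyin, of w] deg_ins[OF finA xx'(2), of w] degA[OF that] by simp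
  have dx': "deg ?B x' = 3" using dg[OF x'V(1)] x'V x'y by simp
  have dy: "deg ?B y = 1" using dg[OF yV(1)] yV x'y by auto
  have d2: "\<forall>w\<in>V. w \<noteq> x' \<and> w \<noteq> y \<longrightarrow> deg ?B w = 2" using dg by auto
  have st1: "(?B, x', y) \<in> states V E"
    by (rule st2[OF BE x'V(1) yV(1) x'y d2]) (use dx' dy in auto)
  have st2': "(?B, y, x') \<in> states V E"
    by (rule st2[OF BE yV(1) x'V(1) x'y[symmetric]]) (use d2 dx' dy in auto)
  have yr: "y \<in> reach A x" using reach_step[OF reach_self xy] .
  have sh1: "tadpole_graph (comp_verts ?B x') (comp_edges ?B x')"
    by (rule T_shape[OF x xy xx']) (simp add: reach_self)
  have sh2: "tadpole_graph (comp_verts ?B y) (comp_edges ?B y)"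
    by (rule T_shape[OF x xy xx']) (simp add: yr)
  show "(?B, x', y) \<in> cls_T V E" using sh1 st1 unfolding cls_T_def by simp
  show "(?B, y, x') \<in> cls_T V E" using sh2 st2' unfolding cls_T_def by simp
qed

lemma S_cls:
  assumes x: "x \<in> V" and xy: "{x,y} \<in> A" and xx': "{x,x'} \<in> E" "{x,x'} \<notin> A"
    and yy': "{y,y'} \<in> E" "{y,y'} \<notin> A"
  shows "(insert {y,y'} (insert {x,x'} A) - {{x,y}}, x', y') \<in> cls_Theta V E \<union> cls_D V E"
    "(insert {y,y'} (insert {x,x'} A) - {{x,y}}, x', y') \<notin> cls_E V E \<union> cls_T V E"
proof -
  note f = S_facts[OF x xy xx' yy']
  let ?B = "insert {y,y'} (insert {x,x'} A) - {{x,y}}"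
  have BE: "?B \<subseteq> E" using AE xx' yy' by auto
  have n1: "{y,y'} \<notin> insert {x,x'} A" using yy'(2) f by (auto simp: doubleton_eq_iff)
  have fin1: "finite (insert {y,y'} (insert {x,x'} A))" using finA by simp
  have xyin: "{x,y} \<in> insert {y,y'} (insert {x,x'} A)" using xy by simp
  have dg: "deg ?B w = 2 + (if w \<in> {x,x'} then 1 else 0) + (if w \<in> {y,y'} then 1 else 0) - (if w \<in> {x,y} then 1 else 0)"
    if "w \<in> V" for w
    using deg_del[OF fin1 xyin, of w] deg_ins[OF finite_insert[THEN iffD2, OF finA] n1, of w]
      deg_ins[OF finA xx'(2), of w] degA[OF that] by simp
  have dx': "deg ?B x' = 3" using dg[OF f(1)] f by auto
  have dy': "deg ?B y' = 3" using dg[OF f(2)] f by auto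
  have d2: "\<forall>w\<in>V. w \<noteq> x' \<and> w \<noteq> y' \<longrightarrow> deg ?B w = 2" using dg f by auto
  have dall: "\<forall>w\<in>V. deg ?B w \<ge> 2" using dg f by auto
  have st: "(?B, x', y') \<in> states V E"
    by (rule st2[OF BE f(1) f(2) f(9) d2]) (use dx' dy' in auto)
  have ne: "\<not> cycle_graph (comp_verts ?B x') (comp_edges ?B x') \<and> \<not> tadpole_graph (comp_verts ?B x') (comp_edges ?B x')"
    by (rule deg_ge2_TD[OF BE f(1) dall]) (use dx' in simp)
  have sh: "theta_graph (comp_verts ?B x') (comp_edges ?B x') \<or> dumbbell_graph (comp_verts ?B x') (comp_edges ?B x')"
    by (rule S_shape[OF x xy xx' yy']) (simp add: reach_self)
  show "(?B, x', y') \<in> cls_Theta V E \<union> cls_D V E"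
    using sh st unfolding cls_Theta_def cls_D_def by auto
  show "(?B, x', y') \<notin> cls_E V E \<union> cls_T V E"
    using ne unfolding cls_E_def cls_T_def by auto
qed

end

context TF begin

lemma r1: "P_chain V E n s t > 0 \<Longrightarrow> reaches V E n s t"
  unfolding reaches_def by auto

lemma rtrans: "reaches V E n s t \<Longrightarrow> reaches V E n t r \<Longrightarrow> reaches V E n s r"
  unfolding reaches_def by (rule rtranclp_trans)

lemma nonA_route:
  assumes n: "n > 0" and x: "x \<in> V" and xz: "{x,z} \<in> E" "{x,z} \<notin> A"
  shows "reaches V E n (A,x,x) (A,z,z)"
proof -
  have zV: "z \<in> V" using edge2[OF xz(1)] by auto
  have s1: "P_chain V E n (A,x,x) (insert {x,z} A, z, x) > 0"
  proof -
    have mw: "move_weight V E n (A,x,x) {x,z} > 0" by (rule mw_ET) (use E_cls[OF x] xz in auto)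
    from step_u[OF finV n zV xz(1) mw] show ?thesis using symdiff_ins[OF xz(2)] by simp
  qed
  have s2: "P_chain V E n (insert {x,z} A, z, x) (A, z, z) > 0"
  proof -
    have ex: "{x,z} \<in> insert {x,z} A" by simp
    have mw: "move_weight V E n (insert {x,z} A, z, x) {x,z} > 0"
      by (rule mw_TD[OF U_cls(2)[OF x xz] U_cls(1)[OF x xz] ex n])
    from step_v[OF finV n zV xz(1) mw] have
      "P_chain V E n (insert {x,z} A, z, x) ((insert {x,z} A - {{x,z}}) \<union> ({{x,z}} - insert {x,z} A), z, z) > 0" .
    moreover have "(insert {x,z} A - {{x,z}}) \<union> ({{x,z}} - insert {x,z} A) = A" using xz(2) by auto
    ultimately show ?thesis by simp
  qed
  show ?thesis using rtrans[OF r1[OF s1] r1[OF s2]] .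
qed

lemma A_route:
  assumes n: "n > 0" and x: "x \<in> V" and xy: "{x,y} \<in> A"
  shows "reaches V E n (A,x,x) (A,y,y)"
proof -
  have yV: "y \<in> V" using nbV[OF xy] by simp
  obtain x' where xx': "{x,x'} \<in> E" "{x,x'} \<notin> A" using nonA_ex[OF x] by blast
  obtain y' where yy': "{y,y'} \<in> E" "{y,y'} \<notin> A" using nonA_ex[OF yV] by blast
  note f = S_facts[OF x xy xx' yy']
  have xyE: "{x,y} \<in> E" using xy AE by auto
  have yx: "{y,x} \<in> A" using xy by (simp add: insert_commute)
  have y'y: "{y',y} \<in> E" "{y',y} \<notin> A" using yy' by (simp_all add: insert_commute)
  let ?A1 = "insert {x,x'} A"
  let ?T1 = "insert {x,x'} A - {{x,y}}"
  let ?S = "insert {y,y'} (insert {x,x'} A) - {{x,y}}"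
  let ?T2 = "insert {y,y'} A - {{y,x}}"
  let ?A2 = "insert {y',y} A"
  have s1: "P_chain V E n (A,x,x) (?A1, x', x) > 0"
  proof -
    have mw: "move_weight V E n (A,x,x) {x,x'} > 0" by (rule mw_ET) (use E_cls[OF x] xx' in auto)
    from step_u[OF finV n f(1) xx'(1) mw] show ?thesis using symdiff_ins[OF xx'(2)] by simp
  qed
  have s2: "P_chain V E n (?A1, x', x) (?T1, x', y) > 0"
  proof -
    have ex: "{x,y} \<in> ?A1" using xy by simp
    have mw: "move_weight V E n (?A1, x', x) {x,y} > 0"
      by (rule mw_TD[OF U_cls(2)[OF x xx'] U_cls(1)[OF x xx'] ex n])
    from step_v[OF finV n yV xyE mw] show ?thesis using symdiff_del[OF ex] by simp
  qed
  have s3: "P_chain V E n (?T1, x', y) (?S, x', y') > 0"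
  proof -
    have nin: "{y,y'} \<notin> ?T1" using yy'(2) f by (auto simp: doubleton_eq_iff)
    have mw: "move_weight V E n (?T1, x', y) {y,y'} > 0"
      by (rule mw_ET) (use T_cls(1)[OF x xy xx'] nin in auto)
    from step_v[OF finV n f(2) yy'(1) mw] have "P_chain V E n (?T1, x', y) (insert {y,y'} ?T1, x', y') > 0"
      using symdiff_ins[OF nin] by simp
    moreover have "insert {y,y'} ?T1 = ?S" using f by (auto simp: doubleton_eq_iff)
    ultimately show ?thesis by simp
  qed
  have s4: "P_chain V E n (?S, x', y') (?T2, x, y') > 0"
  proof -
    have ex: "{x',x} \<in> ?S" using f by (auto simp: doubleton_eq_iff)
    have mw: "move_weight V E n (?S, x', y') {x',x} > 0"
      by (rule mw_TD[OF S_cls(2)[OF x xy xx' yy'] S_cls(1)[OF x xy xx' yy'] ex n])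
    have x'xE: "{x',x} \<in> E" using xx'(1) by (simp add: insert_commute)
    from step_u[OF finV n x x'xE mw] have "P_chain V E n (?S, x', y') (?S - {{x',x}}, x, y') > 0"
      using symdiff_del[OF ex] by simp
    moreover have "?S - {{x',x}} = ?T2"
    proof -
      have "{x',x} \<notin> A" using xx'(2) by (simp add: insert_commute)
      moreover have "{x',x} \<noteq> {y,y'}" "{x',x} \<noteq> {x,y}" "{y,x} = {x,y}" using f by (auto simp: doubleton_eq_iff)
      ultimately show ?thesis by (auto simp: insert_commute)
    qed
    ultimately show ?thesis by simp
  qed
  have s5: "P_chain V E n (?T2, x, y') (?A2, y, y') > 0"
  proof -
    have nin: "{x,y} \<notin> ?T2" by (auto simp: insert_commute)
    have mw: "move_weight V E n (?T2, x, y') {x,y} > 0"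
      by (rule mw_ET) (use T_cls(2)[OF yV yx yy'] nin in auto)
    from step_u[OF finV n yV xyE mw] have "P_chain V E n (?T2, x, y') (insert {x,y} ?T2, y, y') > 0"
      using symdiff_ins[OF nin] by simp
    moreover have "insert {x,y} ?T2 = ?A2" using xy by (auto simp: insert_commute)
    ultimately show ?thesis by simp
  qed
  have s6: "P_chain V E n (?A2, y, y') (A, y, y) > 0"
  proof -
    have ex: "{y',y} \<in> ?A2" by simp
    have mw: "move_weight V E n (?A2, y, y') {y',y} > 0"
      by (rule mw_TD[OF U_cls(2)[OF f(2) y'y] U_cls(1)[OF f(2) y'y] ex n])
    have y'yE: "{y',y} \<in> E" using y'y by simp
    from step_v[OF finV n yV y'yE mw] have "P_chain V E n (?A2, y, y') (?A2 - {{y',y}}, y, y) > 0"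
      using symdiff_del[OF ex] by simp
    moreover have "?A2 - {{y',y}} = A" using y'y(2) by auto
    ultimately show ?thesis by simp
  qed
  show ?thesis
    using rtrans[OF r1[OF s1] rtrans[OF r1[OF s2] rtrans[OF r1[OF s3] rtrans[OF r1[OF s4] rtrans[OF r1[OF s5] r1[OF s6]]]]]] .
qed

lemma edge_route:
  assumes n: "n > 0" and e: "{x,z} \<in> E"
  shows "reaches V E n (A,x,x) (A,z,z)"
proof -
  have x: "x \<in> V" using edge2[OF e] by simp
  show ?thesis
  proof (cases "{x,z} \<in> A")
    case True then show ?thesis using A_route[OF n x] by simp
  next
    case False then show ?thesis using nonA_route[OF n x e] by simp
  qed
qed

lemma conn_route:
  assumes n: "n > 0" and p: "(x,y) \<in> (adj E)\<^sup>*"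
  shows "reaches V E n (A,x,x) (A,y,y)"
  using p
proof (induction rule: rtrancl_induct)
  case base then show ?case unfolding reaches_def by simp
next
  case (step y z)
  then have "{y,z} \<in> E" by (simp add: adj_def)
  then show ?case using rtrans[OF step.IH edge_route[OF n]] by simp
qed

end

theorem lemma2:
  fixes V :: "'a set" and E :: "'a set set" and n :: real
  assumes "finite V" and "simple_graph V E" and "connected_graph V E"
    and "bipartite V E" and "cubic V E" and "n > 0"
    and "A \<in> two_factors V E" and "x \<in> V" and "y \<in> V"
  shows "reaches V E n (A, x, x) (A, y, y) \<and> reaches V E n (A, y, y) (A, x, x)"
proof -
  interpret TF V E A using assms by unfold_locales
  have "(x,y) \<in> (adj E)\<^sup>*" "(y,x) \<in> (adj E)\<^sup>*" using assms(3,8,9) unfolding connected_graph_def by auto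
  then show ?thesis using conn_route[OF assms(6)] by blast
qed


end
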